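(* Let $m,n,d,e$ be positive integers with $m=2n$ and $e=\gcd(n,d)=\gcd(m,d)$, and let $s\ge i\ge1$ be integers. Then \[|V_{s,i}|=2^{mi}\sum_{u=0}^{i}\binom{i}{u}_{2^e}2^{eu(u+1)/2}\prod_{j=0}^{u-1}(1-2^{ej-m}).\]
   Context: For integers $s\ge0$ and $i\ge1$, $V_{s,i}$ denotes the set of solutions $(x_1,\dots,x_{2i})\in\mathbb{F}_{2^m}^{2i}$ of the system \[\sum_{l=1}^i\big(x_{2l-1}x_{2l}^{2^{(\frac{n}{e}-j)d}}+x_{2l-1}^{2^{(\frac{n}{e}-j)d}}x_{2l}\big)=0,\qquad j=0,1,\dots,s.\] $\binom{a}{b}_q$ is the Gaussian binomial coefficient. *)

theory Defs
  imports Complex_Main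
begin

definition gauss_binom :: "real \<Rightarrow> nat \<Rightarrow> nat \<Rightarrow> real" where
  "gauss_binom q a b =
     (if b \<le> a then (\<Prod>j<b. (q ^ (a - j) - 1)) / (\<Prod>j<b. (q ^ (j + 1) - 1)) else 0)"

text \<open>Power of the Frobenius with an integer exponent t on a field of order 2^m:
  x \<mapsto> x^(2^t), where t is reduced modulo m (the Frobenius x \<mapsto> x^2 has order m,
  so this is the usual meaning also for negative t).\<close>
definition frob :: "nat \<Rightarrow> int \<Rightarrow> 'a::field \<Rightarrow> 'a" where
  "frob m t x = x ^ (2 ^ nat (t mod int m))"

text \<open>V_{s,i}: tuples (x_1,...,x_{2i}) represented as lists of length 2i
  (x_k = xs ! (k-1)).\<close>
definition V_set :: "nat \<Rightarrow> nat \<Rightarrow> nat \<Rightarrow> nat \<Rightarrow> nat \<Rightarrow> nat \<Rightarrow> 'a::field list set" where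
  "V_set m n d e s i =
    {xs. length xs = 2 * i \<and>
       (\<forall>j\<in>{0..s}.
          (\<Sum>l\<in>{1..i}.
             xs ! (2*l - 2) * frob m ((int (n div e) - int j) * int d) (xs ! (2*l - 1))
           + frob m ((int (n div e) - int j) * int d) (xs ! (2*l - 2)) * xs ! (2*l - 1)) = 0)}"

end

theory Submission
  imports Defs "HOL-Computational_Algebra.Polynomial"
begin


lemma even_card_invol:
  fixes S :: "'b set" and f :: "'b \<Rightarrow> 'b"
  assumes "finite S" "\<And>x. x \<in> S \<Longrightarrow> f x \<in> S" "\<And>x. x \<in> S \<Longrightarrow> f (f x) = x"
    "\<And>x. x \<in> S \<Longrightarrow> f x \<noteq> x"
  shows "even (card S)"
  using assms
proof (induction "card S" arbitrary: S rule: less_induct)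
  case less
  show ?case
  proof (cases "S = {}")
    case True then show ?thesis by simp
  next
    case False
    then obtain x where x: "x \<in> S" by blast
    let ?S' = "S - {x, f x}"
    have fx: "f x \<in> S" "f x \<noteq> x" using less.prems x by auto
    have c: "card S = card ?S' + 2"
    proof -
      have "card ?S' = card S - card {x, f x}"
        using less.prems(1) x fx by (subst card_Diff_subset) auto
      moreover have "card {x, f x} = 2" using fx by simp
      moreover have "card S \<ge> 2"
        using less.prems(1) x fx by (metis \<open>card {x, f x} = 2\<close> card_mono empty_subsetI insert_subset)
      ultimately show ?thesis by simp
    qed
    have "even (card ?S')"
    proof (rule less.hyps)
      show "card ?S' < card S" using c by simp
      show "finite ?S'" using less.prems by simp
      show "\<And>y. y \<in> ?S' \<Longrightarrow> f y \<in> ?S'"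
        using less.prems x by (metis Diff_iff insertCI insertE singletonD)
      show "\<And>y. y \<in> ?S' \<Longrightarrow> f (f y) = y" using less.prems by auto
      show "\<And>y. y \<in> ?S' \<Longrightarrow> f y \<noteq> y" using less.prems by auto
    qed
    then show ?thesis using c by simp
  qed
qed

lemma char2:
  assumes "card (UNIV :: 'a::{field,finite} set) = 2 ^ m" "m > 0"
  shows "(1::'a) + 1 = 0"
proof (rule ccontr)
  assume h: "(1::'a) + 1 \<noteq> 0"
  have neg: "- x \<noteq> x" if "x \<noteq> 0" for x :: 'a
  proof
    assume "- x = x"
    then have "(1 + 1) * x = 0" by (simp add: distrib_right)
    then show False using h that by simp
  qed
  have "even (card (UNIV - {0::'a}))"
    by (rule even_card_invol[where f = uminus]) (auto simp: neg)
  moreover have "card (UNIV - {0::'a}) = 2 ^ m - 1" using assms by (simp add: card_Diff_singleton)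
  ultimately show False using assms(2) by simp
qed

lemma fermat:
  assumes "card (UNIV :: 'a::{field,finite} set) = 2 ^ m"
  shows "(x::'a) ^ (2 ^ m) = x"
proof (cases "x = 0")
  case True then show ?thesis by simp
next
  case False
  let ?U = "UNIV - {0::'a}"
  have bij: "bij_betw (\<lambda>y. x * y) ?U ?U"
    unfolding bij_betw_def inj_on_def
  proof (intro conjI ballI impI equalityI subsetI)
    fix y assume "y \<in> ?U" then show "y \<in> (\<lambda>y. x * y) ` ?U"
      using False by (intro image_eqI[of _ _ "y / x"]) auto
  qed (use False in auto)
  have "(\<Prod>y\<in>?U. x * y) = (\<Prod>y\<in>?U. y)"
    using prod.reindex_bij_betw[OF bij, of "\<lambda>y. y"] by simp
  moreover have "(\<Prod>y\<in>?U. x * y) = x ^ card ?U * (\<Prod>y\<in>?U. y)"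
    by (simp add: prod.distrib)
  moreover have "(\<Prod>y\<in>?U. y) \<noteq> 0" by simp
  ultimately have "x ^ card ?U = 1" by simp
  moreover have "card ?U = 2 ^ m - 1" using assms by (simp add: card_Diff_singleton)
  ultimately have "x ^ (2 ^ m - 1) = 1" by simp
  then have "x ^ (2^m - 1) * x = x" by simp
  then show ?thesis by (metis One_nat_def Suc_pred mult.commute pos2 power_Suc zero_less_power)
qed



lemma add_self_ch2: "(1::'a::field) + 1 = 0 \<Longrightarrow> (x::'a) + x = 0"
  by (metis distrib_left mult.right_neutral mult_zero_right)

lemma minus_ch2: "(1::'a::field) + 1 = 0 \<Longrightarrow> - (x::'a) = x"
  by (metis add_self_ch2 add_eq_0_iff)

lemma diff_ch2: "(1::'a::field) + 1 = 0 \<Longrightarrow> (x::'a) - y = x + y"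
  by (metis minus_ch2 diff_conv_add_uminus)

lemma pow2_add:
  assumes ch: "(1::'a::field) + 1 = 0"
  shows "((x::'a) + y) ^ (2 ^ j) = x ^ (2 ^ j) + y ^ (2 ^ j)"
proof (induction j)
  case 0 then show ?case by simp
next
  case (Suc j)
  have sq: "(a + b) ^ 2 = a ^ 2 + b ^ 2" for a b :: 'a
  proof -
    have "(a + b) ^ 2 = a^2 + b^2 + (a*b + a*b)" by (simp add: power2_eq_square algebra_simps)
    then show ?thesis using add_self_ch2[OF ch, of "a*b"] by simp
  qed
  have "(x + y) ^ (2 ^ Suc j) = ((x + y) ^ (2 ^ j)) ^ 2" by (simp add: power_mult[symmetric] mult.commute)
  also have "\<dots> = (x ^ (2 ^ j)) ^ 2 + (y ^ (2 ^ j)) ^ 2" using Suc sq by simp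
  also have "\<dots> = x ^ (2 ^ Suc j) + y ^ (2 ^ Suc j)" by (simp add: power_mult[symmetric] mult.commute)
  finally show ?case .
qed

lemma pow2_sum:
  assumes ch: "(1::'a::field) + 1 = 0"
  shows "(\<Sum>x\<in>A. (f x::'a)) ^ (2 ^ j) = (\<Sum>x\<in>A. f x ^ (2 ^ j))"
  by (induction A rule: infinite_finite_induct) (auto simp: pow2_add[OF ch])

lemma pow2_inj:
  assumes ch: "(1::'a::field) + 1 = 0" and "(x::'a) ^ (2 ^ j) = y ^ (2 ^ j)"
  shows "x = y"
proof -
  have "(x + y) ^ (2 ^ j) = 0" using assms pow2_add[OF ch, of x y j] add_self_ch2[OF ch] by simp
  then have "x + y = 0" by simp
  then show ?thesis by (metis add_eq_0_iff minus_ch2[OF ch])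
qed

lemma pow2_mult_m:
  assumes fe: "\<And>z::'a::field. z ^ (2 ^ m) = z"
  shows "(x::'a) ^ (2 ^ (m * c + r)) = x ^ (2 ^ r)"
proof (induction c)
  case 0 then show ?case by simp
next
  case (Suc c)
  have "x ^ (2 ^ (m * Suc c + r)) = (x ^ (2 ^ (m * c + r))) ^ (2 ^ m)"
    by (simp add: power_mult[symmetric] power_add algebra_simps)
  then show ?case using Suc fe by simp
qed

lemma pow2_mod:
  assumes fe: "\<And>z::'a::field. z ^ (2 ^ m) = z"
  shows "(x::'a) ^ (2 ^ j) = x ^ (2 ^ (j mod m))"
  using pow2_mult_m[OF fe, of x "j div m" "j mod m"] by simp

lemma frob_nat: "frob m (int j) x = x ^ (2 ^ (j mod m))"
  unfolding frob_def by (simp add: nat_mod_distrib[symmetric] of_nat_mod[symmetric])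

lemma frob_add:
  assumes ch: "(1::'a::field) + 1 = 0"
  shows "frob m t ((x::'a) + y) = frob m t x + frob m t y"
  unfolding frob_def using pow2_add[OF ch] by simp

lemma frob_mult: "frob m t ((x::'a::field) * y) = frob m t x * frob m t y"
  unfolding frob_def by (simp add: power_mult_distrib)

lemma frob_sum:
  assumes ch: "(1::'a::field) + 1 = 0"
  shows "frob m t (\<Sum>x\<in>A. (f x::'a)) = (\<Sum>x\<in>A. frob m t (f x))"
  unfolding frob_def using pow2_sum[OF ch] by simp

lemma frob_0 [simp]: "frob m t (0::'a::field) = 0" unfolding frob_def by simp
lemma frob_1 [simp]: "frob m t (1::'a::field) = 1" unfolding frob_def by simp

lemma frob_comp:
  assumes fe: "\<And>z::'a::field. z ^ (2 ^ m) = z" and m: "m > 0"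
  shows "frob m t (frob m t' (x::'a)) = frob m (t + t') x"
proof -
  define A where "A = nat (t mod int m)"
  define B where "B = nat (t' mod int m)"
  have At: "int A = t mod int m" unfolding A_def using m by simp
  have Bt: "int B = t' mod int m" unfolding B_def using m by simp
  have "nat ((t + t') mod int m) = (A + B) mod m"
  proof -
    have "(t + t') mod int m = (int A + int B) mod int m" using At Bt by (simp add: mod_add_eq)
    also have "\<dots> = int ((A + B) mod m)" by (simp add: of_nat_mod)
    finally show ?thesis by simp
  qed
  then have "frob m (t + t') x = x ^ (2 ^ ((A + B) mod m))" unfolding frob_def by simp
  also have "\<dots> = x ^ (2 ^ (A + B))" using pow2_mod[OF fe, of x "A+B"] by simp
  also have "\<dots> = (x ^ (2 ^ B)) ^ (2 ^ A)" by (simp add: power_mult[symmetric] power_add mult.commute)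
  finally show ?thesis unfolding frob_def A_def B_def by simp
qed

lemma frob_zero_exp [simp]: "m > 0 \<Longrightarrow> frob m 0 x = x" unfolding frob_def by simp

lemma frob_cong: "t mod int m = t' mod int m \<Longrightarrow> frob m t x = frob m t' x"
  unfolding frob_def by simp

lemma frob_inj:
  assumes ch: "(1::'a::field) + 1 = 0" and "frob m t (x::'a) = frob m t y"
  shows "x = y"
  using assms pow2_inj[OF ch] unfolding frob_def by blast

definition Kf :: "nat \<Rightarrow> 'a::field set" where "Kf e = {z. z ^ (2 ^ e) = z}"

lemma Kf_pow: "z \<in> Kf e \<Longrightarrow> z ^ (2 ^ (e * c)) = z"
proof (induction c)
  case 0 then show ?case by simp
next
  case (Suc c)
  have "z ^ (2 ^ (e * Suc c)) = (z ^ (2 ^ (e * c))) ^ (2 ^ e)"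
    by (simp add: power_mult[symmetric] power_add algebra_simps)
  then show ?case using Suc by (simp add: Kf_def)
qed

lemma frob_K:
  assumes "z \<in> Kf e" "e dvd m" "int e dvd t" "m > 0"
  shows "frob m t z = z"
proof -
  have "int e dvd t mod int m" using assms by (simp add: dvd_mod)
  then have "e dvd nat (t mod int m)" using assms(4)
    by (metis Euclidean_Rings.pos_mod_sign int_dvd_int_iff int_nat_eq of_nat_0_less_iff)
  then obtain c where "nat (t mod int m) = e * c" by blast
  then show ?thesis unfolding frob_def using Kf_pow[OF assms(1)] by simp
qed

lemma fixed_sub:
  assumes ch: "(1::'a::field) + 1 = 0" and "(z::'a) ^ (2 ^ a) = z" "z ^ (2 ^ b) = z" "b \<le> a"
  shows "z ^ (2 ^ (a - b)) = z"
proof -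
  have "(z ^ (2 ^ (a - b))) ^ (2 ^ b) = z ^ (2 ^ a)"
    using assms(4) by (simp add: power_mult[symmetric] power_add[symmetric])
  then have "(z ^ (2 ^ (a - b))) ^ (2 ^ b) = z ^ (2 ^ b)" using assms by simp
  then show ?thesis using pow2_inj[OF ch] by blast
qed

lemma fixed_mul:
  assumes "(z::'a::field) ^ (2 ^ a) = z"
  shows "z ^ (2 ^ (a * c)) = z"
  using Kf_pow[of z a c] assms by (simp add: Kf_def)

lemma fixed_gcd:
  assumes ch: "(1::'a::field) + 1 = 0" and "(z::'a) ^ (2 ^ a) = z" "z ^ (2 ^ b) = z"
  shows "z ^ (2 ^ gcd a b) = z"
proof (cases "a = 0")
  case True then show ?thesis using assms by simp
next
  case False
  obtain x y where xy: "a * x = b * y + gcd a b" using bezout_nat[OF False] by blast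
  have "z ^ (2 ^ (a * x)) = z" using fixed_mul assms by blast
  moreover have "z ^ (2 ^ (b * y)) = z" using fixed_mul assms by blast
  ultimately show ?thesis using fixed_sub[OF ch, of z "a * x" "b * y"] xy by simp
qed

lemma frobd_fixed:
  assumes ch: "(1::'a::field) + 1 = 0" and fe: "\<And>z::'a. z ^ (2 ^ m) = z"
    and "gcd m d = e" "m > 0" and "frob m (int d) (z::'a) = z"
  shows "z \<in> Kf e"
proof -
  have "z ^ (2 ^ (d mod m)) = z" using assms(5) by (simp add: frob_nat)
  then have "z ^ (2 ^ gcd (d mod m) m) = z" using fixed_gcd[OF ch] fe by blast
  moreover have "gcd (d mod m) m = e" using assms(3) by (metis gcd.commute gcd_red_nat)
  ultimately show ?thesis by (simp add: Kf_def)
qed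

lemma K_closed:
  assumes ch: "(1::'a::field) + 1 = 0"
  shows "(0::'a) \<in> Kf e" "(1::'a) \<in> Kf e" "x \<in> Kf e \<Longrightarrow> y \<in> Kf e \<Longrightarrow> (x::'a) + y \<in> Kf e"
    "x \<in> Kf e \<Longrightarrow> y \<in> Kf e \<Longrightarrow> (x::'a) * y \<in> Kf e"
    "x \<in> Kf e \<Longrightarrow> - (x::'a) \<in> Kf e" "x \<in> Kf e \<Longrightarrow> y \<in> Kf e \<Longrightarrow> (x::'a) - y \<in> Kf e"
    "x \<in> Kf e \<Longrightarrow> inverse (x::'a) \<in> Kf e"
  unfolding Kf_def using pow2_add[OF ch]
  by (auto simp: power_mult_distrib power_inverse minus_ch2[OF ch] diff_ch2[OF ch])



definition indepf :: "'a::field set \<Rightarrow> nat \<Rightarrow> (nat \<Rightarrow> 'a) \<Rightarrow> bool" where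
  "indepf K R \<beta> \<longleftrightarrow> (\<forall>c. (\<forall>r<R. c r \<in> K) \<longrightarrow> (\<Sum>r<R. c r * \<beta> r) = 0 \<longrightarrow> (\<forall>r<R. c r = 0))"

lemma frob_eq0: "frob m t (x::'a::field) = 0 \<longleftrightarrow> x = 0"
  unfolding frob_def by simp

lemma moore:
  fixes \<beta> \<alpha> :: "nat \<Rightarrow> 'a::field"
  assumes ch: "(1::'a) + 1 = 0" and fe: "\<And>z::'a. z ^ (2 ^ m) = z"
    and m: "m > 0" and g: "gcd m d = e"
  shows "indepf (Kf e) R \<beta> \<Longrightarrow> (\<And>a. a0 \<le> a \<Longrightarrow> a < a0 + int R \<Longrightarrow>
            (\<Sum>r<R. \<alpha> r * frob m (a * int d) (\<beta> r)) = 0) \<Longrightarrow> r < R \<Longrightarrow> \<alpha> r = 0"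
proof (induction R arbitrary: \<beta> \<alpha> a0 r)
  case 0 then show ?case by simp
next
  case (Suc R)
  let ?K = "Kf e :: 'a set"
  have edvd: "e dvd m" "e dvd d" using g by auto
  let ?s = "\<lambda>a x. frob m (a * int d) (x::'a)"
  have sK: "?s a c = c" if "c \<in> ?K" for a c
    using frob_K[OF that edvd(1) _ m] edvd(2) by simp
  have bR: "\<beta> R \<noteq> 0"
  proof
    assume h: "\<beta> R = 0"
    define c where "c = (\<lambda>r. if r = R then (1::'a) else 0)"
    have "(\<Sum>r<Suc R. c r * \<beta> r) = 0" using h by (simp add: c_def)
    moreover have "\<forall>r<Suc R. c r \<in> ?K" using K_closed(1,2)[OF ch, of e] by (simp add: c_def)
    ultimately have "c R = 0" using Suc.prems(1) unfolding indepf_def by blast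
    then show False by (simp add: c_def)
  qed
  define \<gamma> where "\<gamma> r = \<beta> r / \<beta> R" for r
  have \<gamma>R: "\<gamma> R = 1" using bR by (simp add: \<gamma>_def)
  have \<beta>\<gamma>: "\<beta> r = \<gamma> r * \<beta> R" for r using bR by (simp add: \<gamma>_def)
  have ind\<gamma>: "indepf ?K (Suc R) \<gamma>"
    unfolding indepf_def
  proof (rule allI, intro impI)
    fix c assume c: "\<forall>r<Suc R. c r \<in> ?K" "(\<Sum>r<Suc R. c r * \<gamma> r) = 0"
    have "(\<Sum>r<Suc R. c r * \<beta> r) = (\<Sum>r<Suc R. c r * \<gamma> r) * \<beta> R"
      by (simp add: \<gamma>_def bR sum_distrib_right distrib_right)
    then have "(\<Sum>r<Suc R. c r * \<beta> r) = 0" using c by simp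
    then show "\<forall>r<Suc R. c r = 0" using c Suc.prems(1) unfolding indepf_def by blast
  qed
  have eq\<gamma>: "(\<Sum>r<R. \<alpha> r * ?s a (\<gamma> r)) + \<alpha> R = 0" if "a0 \<le> a" "a < a0 + int (Suc R)" for a
  proof -
    have "(\<Sum>r<Suc R. \<alpha> r * ?s a (\<beta> r)) = (\<Sum>r<Suc R. \<alpha> r * ?s a (\<gamma> r)) * ?s a (\<beta> R)"
    proof -
      have "(\<Sum>r<Suc R. \<alpha> r * ?s a (\<beta> r)) = (\<Sum>r<Suc R. \<alpha> r * ?s a (\<gamma> r * \<beta> R))"
        using \<beta>\<gamma> by metis
      then show ?thesis by (simp add: frob_mult sum_distrib_right distrib_right mult.assoc)
    qed
    moreover have "?s a (\<beta> R) \<noteq> 0" using bR by (simp add: frob_eq0)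
    ultimately have "(\<Sum>r<Suc R. \<alpha> r * ?s a (\<gamma> r)) = 0" using Suc.prems(2)[OF that] by simp
    then show ?thesis using \<gamma>R by simp
  qed
  define \<delta> where "\<delta> r = ?s 1 (\<gamma> r) + \<gamma> r" for r
  have sd: "?s a (\<delta> r) = ?s (a + 1) (\<gamma> r) + ?s a (\<gamma> r)" for a r
    unfolding \<delta>_def using frob_add[OF ch] frob_comp[OF fe m] by (simp add: distrib_right)
  have ind\<delta>: "indepf ?K R \<delta>"
    unfolding indepf_def
  proof (rule allI, intro impI)
    fix c assume c: "\<forall>r<R. c r \<in> ?K" "(\<Sum>r<R. c r * \<delta> r) = 0"
    define v where "v = (\<Sum>r<R. c r * \<gamma> r)"
    have "?s 1 v = (\<Sum>r<R. c r * ?s 1 (\<gamma> r))"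
      unfolding v_def using c(1) sK[of _ 1]
      by (simp add: frob_sum[OF ch] frob_mult del: of_nat_Suc)
    then have "?s 1 v + v = (\<Sum>r<R. c r * \<delta> r)"
      unfolding v_def \<delta>_def by (simp add: sum.distrib distrib_left)
    then have "?s 1 v = v" using c(2) by (metis add_eq_0_iff minus_ch2[OF ch])
    then have vK: "v \<in> ?K" using frobd_fixed[OF ch fe g m] by simp
    define c' where "c' r = (if r = R then v else c r)" for r
    have "(\<Sum>r<Suc R. c' r * \<gamma> r) = v + v" using \<gamma>R by (simp add: c'_def v_def)
    also have "\<dots> = 0" using add_self_ch2[OF ch] by simp
    finally have z: "(\<Sum>r<Suc R. c' r * \<gamma> r) = 0" .
    have "\<forall>r<Suc R. c' r \<in> ?K" using c(1) vK by (simp add: c'_def)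
    then have "\<forall>r<Suc R. c' r = 0" using ind\<gamma> z unfolding indepf_def by blast
    then show "\<forall>r<R. c r = 0" unfolding c'_def by (metis less_Suc_eq less_irrefl)
  qed
  have eq\<delta>: "(\<Sum>r<R. \<alpha> r * ?s a (\<delta> r)) = 0" if "a0 \<le> a" "a < a0 + int R" for a
  proof -
    have "(\<Sum>r<R. \<alpha> r * ?s (a+1) (\<gamma> r)) + \<alpha> R = 0" using eq\<gamma> that by simp
    moreover have "(\<Sum>r<R. \<alpha> r * ?s a (\<gamma> r)) + \<alpha> R = 0" using eq\<gamma> that by simp
    ultimately have "(\<Sum>r<R. \<alpha> r * ?s (a+1) (\<gamma> r)) + (\<Sum>r<R. \<alpha> r * ?s a (\<gamma> r)) = 0"
      by (metis add_eq_0_iff minus_ch2[OF ch])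
    then show ?thesis by (simp add: sd distrib_left sum.distrib)
  qed
  have IH: "\<alpha> r' = 0" if "r' < R" for r'
    using Suc.IH[OF ind\<delta> eq\<delta> that] by blast
  have "\<alpha> R = 0" using eq\<gamma>[of a0] IH by simp
  then show ?case using IH Suc.prems(3) less_Suc_eq by blast
qed



definition subf :: "'a::field set \<Rightarrow> bool" where
  "subf K \<longleftrightarrow> 0 \<in> K \<and> 1 \<in> K \<and> (\<forall>x\<in>K. \<forall>y\<in>K. x + y \<in> K \<and> x * y \<in> K) \<and>
      (\<forall>x\<in>K. - x \<in> K \<and> inverse x \<in> K)"

lemma subf_Kf: assumes "(1::'a::field) + 1 = 0" shows "subf (Kf e :: 'a set)"
proof -
  note k = K_closed[OF assms, where e=e]
  show ?thesis unfolding subf_def using k(1,2) k(3) k(4) k(5) k(7) by simp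
qed

fun spanl :: "'a::field set \<Rightarrow> 'a list \<Rightarrow> 'a set" where
  "spanl K [] = {0}"
| "spanl K (b # B) = {c * b + v | c v. c \<in> K \<and> v \<in> spanl K B}"

fun rk :: "'a::field set \<Rightarrow> 'a list \<Rightarrow> nat" where
  "rk K [] = 0"
| "rk K (b # B) = (if b \<in> spanl K B then rk K B else Suc (rk K B))"

fun indep :: "'a::field set \<Rightarrow> 'a list \<Rightarrow> bool" where
  "indep K [] = True"
| "indep K (b # B) = (b \<notin> spanl K B \<and> indep K B)"

context
  fixes K :: "'a::field set"
  assumes sf: "subf K"
begin

lemma K0: "0 \<in> K" and K1: "1 \<in> K" and Kadd: "x \<in> K \<Longrightarrow> y \<in> K \<Longrightarrow> x + y \<in> K"
  and Kmul: "x \<in> K \<Longrightarrow> y \<in> K \<Longrightarrow> x * y \<in> K" and Kneg: "x \<in> K \<Longrightarrow> - x \<in> K"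
  and Kinv: "x \<in> K \<Longrightarrow> inverse x \<in> K"
  using sf unfolding subf_def by auto

lemma Kdiff: "x \<in> K \<Longrightarrow> y \<in> K \<Longrightarrow> x - y \<in> K"
  using Kadd Kneg by (metis diff_conv_add_uminus)

lemma span_0: "0 \<in> spanl K B"
  by (induction B) (auto intro!: exI[of _ 0] K0)

lemma span_add: "u \<in> spanl K B \<Longrightarrow> v \<in> spanl K B \<Longrightarrow> u + v \<in> spanl K B"
proof (induction B arbitrary: u v)
  case Nil then show ?case by simp
next
  case (Cons b B)
  obtain c1 v1 where 1: "u = c1 * b + v1" "c1 \<in> K" "v1 \<in> spanl K B" using Cons.prems by auto
  obtain c2 v2 where 2: "v = c2 * b + v2" "c2 \<in> K" "v2 \<in> spanl K B" using Cons.prems by auto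
  have "u + v = (c1 + c2) * b + (v1 + v2) \<and> c1 + c2 \<in> K \<and> v1 + v2 \<in> spanl K B"
    using 1 2 Cons.IH Kadd by (simp add: algebra_simps)
  then show ?case by auto
qed

lemma span_smult: "k \<in> K \<Longrightarrow> v \<in> spanl K B \<Longrightarrow> k * v \<in> spanl K B"
proof (induction B arbitrary: v)
  case Nil then show ?case by simp
next
  case (Cons b B)
  obtain c1 v1 where 1: "v = c1 * b + v1" "c1 \<in> K" "v1 \<in> spanl K B" using Cons.prems by auto
  have "k * v1 \<in> spanl K B" using 1 Cons by simp
  moreover have "k * v = (k * c1) * b + k * v1" using 1 by (simp add: algebra_simps)
  ultimately have "k * v = (k * c1) * b + k * v1 \<and> k * c1 \<in> K \<and> k * v1 \<in> spanl K B"
    using 1 Cons.prems Kmul by simp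
  then show ?case by auto
qed

lemma span_neg: "v \<in> spanl K B \<Longrightarrow> - v \<in> spanl K B"
  using span_smult[OF Kneg[OF K1]] by fastforce

lemma span_diff: "u \<in> spanl K B \<Longrightarrow> v \<in> spanl K B \<Longrightarrow> u - v \<in> spanl K B"
  using span_add span_neg by (metis diff_conv_add_uminus)

lemma span_cons_sub: "spanl K B \<subseteq> spanl K (b # B)"
  using K0 by force

lemma span_head: "b \<in> spanl K (b # B)"
  using K1 span_0 by force

lemma span_set: "set B \<subseteq> spanl K B"
proof (induction B)
  case Nil then show ?case by simp
next
  case (Cons b B) then show ?case using span_head[of b B] span_cons_sub[of B b] by auto
qed

lemma span_sub:
  assumes "set B \<subseteq> spanl K C"
  shows "spanl K B \<subseteq> spanl K C"
  using assms
proof (induction B)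
  case Nil then show ?case using span_0 by simp
next
  case (Cons b B)
  show ?case
  proof
    fix v assume "v \<in> spanl K (b # B)"
    then obtain c v1 where "v = c * b + v1" "c \<in> K" "v1 \<in> spanl K B" by auto
    then show "v \<in> spanl K C" using Cons span_add span_smult by auto
  qed
qed

lemma span_cons_eq:
  assumes "spanl K B = spanl K C"
  shows "spanl K (b # B) = spanl K (b # C)"
  using assms by simp

lemma span_cons_mem:
  assumes "b \<in> spanl K B"
  shows "spanl K (b # B) = spanl K B"
proof
  show "spanl K (b # B) \<subseteq> spanl K B"
    using span_sub[of "b # B" B] span_set assms by auto
qed (rule span_cons_sub)

lemma span_sum_form:
  "v \<in> spanl K B \<longleftrightarrow> (\<exists>c. (\<forall>r. c r \<in> K) \<and> v = (\<Sum>r<length B. c r * B ! r))"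
proof (induction B arbitrary: v)
  case Nil then show ?case using K0 by auto
next
  case (Cons b B)
  show ?case
  proof
    assume "v \<in> spanl K (b # B)"
    then obtain c0 v1 where v: "v = c0 * b + v1" "c0 \<in> K" "v1 \<in> spanl K B" by auto
    then obtain c where c: "\<forall>r. c r \<in> K" "v1 = (\<Sum>r<length B. c r * B ! r)" using Cons.IH by blast
    let ?c = "case_nat c0 c"
    have "\<forall>r. ?c r \<in> K" using c v by (simp split: nat.split)
    moreover have "v = (\<Sum>r<length (b # B). ?c r * (b # B) ! r)"
      using v c by (simp only: length_Cons sum.lessThan_Suc_shift) simp
    ultimately show "\<exists>c. (\<forall>r. c r \<in> K) \<and> v = (\<Sum>r<length (b # B). c r * (b # B) ! r)" by blast
  next
    assume "\<exists>c. (\<forall>r. c r \<in> K) \<and> v = (\<Sum>r<length (b # B). c r * (b # B) ! r)"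
    then obtain c where c: "\<forall>r. c r \<in> K" "v = (\<Sum>r<length (b # B). c r * (b # B) ! r)" by blast
    then have "v = c 0 * b + (\<Sum>r<length B. c (Suc r) * B ! r)" by (simp only: length_Cons sum.lessThan_Suc_shift) simp
    moreover have "(\<Sum>r<length B. c (Suc r) * B ! r) \<in> spanl K B"
      unfolding Cons.IH by (rule exI[of _ "\<lambda>r. c (Suc r)"]) (use c(1) in simp)
    ultimately show "v \<in> spanl K (b # B)" using c(1) by auto
  qed
qed

lemma rk_le: "rk K B \<le> length B"
  by (induction B) auto

lemma finite_span: "finite K \<Longrightarrow> finite (spanl K B)"
proof (induction B)
  case Nil then show ?case by simp
next
  case (Cons b B)
  have "spanl K (b # B) = (\<lambda>(c, v). c * b + v) ` (K \<times> spanl K B)" by auto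
  then show ?case using Cons by simp
qed

lemma card_span: "finite K \<Longrightarrow> card (spanl K B) = card K ^ rk K B"
proof (induction B)
  case Nil then show ?case by simp
next
  case (Cons b B)
  show ?case
  proof (cases "b \<in> spanl K B")
    case True then show ?thesis using Cons span_cons_mem by simp
  next
    case False
    have eq: "spanl K (b # B) = (\<lambda>(c, v). c * b + v) ` (K \<times> spanl K B)" by auto
    have "inj_on (\<lambda>(c, v). c * b + v) (K \<times> spanl K B)"
    proof (rule inj_onI, clarify)
      fix c1 v1 c2 v2 assume h: "c1 \<in> K" "v1 \<in> spanl K B" "c2 \<in> K" "v2 \<in> spanl K B"
        "c1 * b + v1 = c2 * b + v2"
      show "c1 = c2 \<and> v1 = v2"
      proof (cases "c1 = c2")
        case True then show ?thesis using h by simp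
      next
        case False
        have "(c1 - c2) * b = v2 - v1" using h(5) by (simp add: algebra_simps)
        then have "b = inverse (c1 - c2) * (v2 - v1)" using False by (simp add: field_simps)
        moreover have "inverse (c1 - c2) \<in> K" using Kinv Kdiff h by blast
        ultimately have "b \<in> spanl K B" using span_smult span_diff h by simp
        then show ?thesis using False \<open>b \<notin> spanl K B\<close> by simp
      qed
    qed
    then have "card (spanl K (b # B)) = card K * card (spanl K B)"
      using eq by (simp add: card_image card_cartesian_product)
    then show ?thesis using Cons False by simp
  qed
qed

lemma indep_indepf: "indep K B \<Longrightarrow> indepf K (length B) (\<lambda>r. B ! r)"
proof (induction B)
  case Nil then show ?case by (simp add: indepf_def)
next
  case (Cons b B)
  show ?case unfolding indepf_def
  proof (rule allI, intro impI)
    fix c assume c: "\<forall>r<length (b # B). c r \<in> K" "(\<Sum>r<length (b # B). c r * (b # B) ! r) = 0"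
    have s: "c 0 * b + (\<Sum>r<length B. c (Suc r) * B ! r) = 0" using c(2) by (simp only: length_Cons sum.lessThan_Suc_shift) simp
    let ?c' = "\<lambda>r. if r < length B then c (Suc r) else 0"
    have inspan: "(\<Sum>r<length B. c (Suc r) * B ! r) \<in> spanl K B"
      unfolding span_sum_form
      by (rule exI[of _ ?c']) (use c(1) K0 in auto)
    have c0: "c 0 = 0"
    proof (rule ccontr)
      assume "c 0 \<noteq> 0"
      have e1: "c 0 * b = - (\<Sum>r<length B. c (Suc r) * B ! r)"
        using s by (metis add_eq_0_iff minus_minus)
      have "b = inverse (c 0) * (c 0 * b)" using \<open>c 0 \<noteq> 0\<close> by simp
      then have "b = - inverse (c 0) * (\<Sum>r<length B. c (Suc r) * B ! r)"
        using e1 by simp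
      moreover have "- inverse (c 0) \<in> K" using c(1) Kinv Kneg by simp
      ultimately have "b \<in> spanl K B" using span_smult[OF _ inspan] by (metis mult_minus_left)
      then show False using Cons.prems by simp
    qed
    have A1: "(\<Sum>r<length B. c (Suc r) * B ! r) = 0" using s c0 by simp
    have A2: "\<forall>r<length B. c (Suc r) \<in> K" using c(1) by simp
    have "indepf K (length B) (\<lambda>r. B ! r)" using Cons.IH Cons.prems by simp
    then have H: "\<forall>c. (\<forall>r<length B. c r \<in> K) \<longrightarrow> (\<Sum>r<length B. c r * B ! r) = 0 \<longrightarrow> (\<forall>r<length B. c r = 0)"
      unfolding indepf_def .
    have "\<forall>r<length B. c (Suc r) = 0"
      using H[rule_format, of "\<lambda>r. c (Suc r)"] A1 A2 by blast
    then show "\<forall>r<length (b # B). c r = 0"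
    proof (intro allI impI)
      fix r assume "\<forall>r<length B. c (Suc r) = 0" "r < length (b # B)"
      then show "c r = 0" using c0 by (cases r) auto
    qed
  qed
qed

end


context
  fixes K :: "'a::field set"
  assumes sf: "subf K"
begin

lemma basis_ex: "\<exists>A. indep K A \<and> spanl K A = spanl K x \<and> length A \<le> length x"
proof (induction x)
  case Nil then show ?case by (intro exI[of _ "[]"]) simp
next
  case (Cons b x)
  then obtain A where A: "indep K A" "spanl K A = spanl K x" "length A \<le> length x" by blast
  show ?case
  proof (cases "b \<in> spanl K x")
    case True then show ?thesis using A span_cons_mem[OF sf True] by (intro exI[of _ A]) simp
  next
    case False then show ?thesis using A by (intro exI[of _ "b # A"]) auto
  qed
qed

lemma span_append_sub: "spanl K B \<subseteq> spanl K (E @ B)"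
proof (induction E)
  case Nil then show ?case by simp
next
  case (Cons b E) then show ?case using span_cons_sub[OF sf, of "E @ B" b] by simp
qed

lemma extend_ex:
  assumes "indep K B0"
  shows "\<exists>E. indep K (E @ B0) \<and> set y \<subseteq> spanl K (E @ B0) \<and> length E \<le> length y"
proof (induction y)
  case Nil then show ?case using assms by (intro exI[of _ "[]"]) simp
next
  case (Cons b y)
  then obtain E where E: "indep K (E @ B0)" "set y \<subseteq> spanl K (E @ B0)" "length E \<le> length y" by blast
  show ?case
  proof (cases "b \<in> spanl K (E @ B0)")
    case True then show ?thesis using E by (intro exI[of _ E]) simp
  next
    case False
    have "set y \<subseteq> spanl K (b # E @ B0)" using E(2) span_cons_sub[OF sf, of "E @ B0" b] by blast
    moreover have "b \<in> spanl K (b # E @ B0)" using span_head[OF sf] by blast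
    ultimately show ?thesis using E False by (intro exI[of _ "b # E"]) simp
  qed
qed

definition crd :: "'a list \<Rightarrow> 'a \<Rightarrow> nat \<Rightarrow> 'a" where
  "crd B v = (SOME c. (\<forall>r. c r \<in> K) \<and> v = (\<Sum>r<length B. c r * B ! r))"

lemma crd_props:
  assumes "v \<in> spanl K B"
  shows "\<forall>r. crd B v r \<in> K" "v = (\<Sum>r<length B. crd B v r * B ! r)"
proof -
  have "\<exists>c. (\<forall>r. c r \<in> K) \<and> v = (\<Sum>r<length B. c r * B ! r)"
    using assms span_sum_form[OF sf] by blast
  from someI_ex[OF this] show "\<forall>r. crd B v r \<in> K" "v = (\<Sum>r<length B. crd B v r * B ! r)"
    unfolding crd_def by blast+
qed

lemma crd_unique:
  assumes ind: "indep K B" and c: "\<forall>r. c r \<in> K" and v: "v = (\<Sum>r<length B. c r * B ! r)"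
    and r: "r < length B"
  shows "crd B v r = c r"
proof -
  have vs: "v \<in> spanl K B" using span_sum_form[OF sf] c v by blast
  note cp = crd_props[OF vs]
  let ?d = "\<lambda>r. c r - crd B v r"
  have "(\<Sum>r<length B. ?d r * B ! r) = 0"
    using v cp(2) by (simp add: left_diff_distrib sum_subtractf)
  moreover have "\<forall>r<length B. ?d r \<in> K" using c cp(1) Kdiff[OF sf] by blast
  moreover have H: "\<forall>c. (\<forall>r<length B. c r \<in> K) \<longrightarrow> (\<Sum>r<length B. c r * B ! r) = 0 \<longrightarrow> (\<forall>r<length B. c r = 0)"
    using indep_indepf[OF sf ind] unfolding indepf_def .
  ultimately have "?d r = 0" using H[rule_format, of ?d] r by blast
  then show ?thesis by simp
qed

lemma crd_basis:
  assumes ind: "indep K B" and i: "i < length B" and r: "r < length B"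
  shows "crd B (B ! i) r = (if r = i then 1 else 0)"
proof -
  let ?c = "\<lambda>r. if r = i then (1::'a) else 0"
  have "B ! i = (\<Sum>r<length B. ?c r * B ! r)" using i by (simp add: if_distrib[of "\<lambda>x. x * _"] sum.delta cong: if_cong)
  moreover have "\<forall>r. ?c r \<in> K" using K0[OF sf] K1[OF sf] by simp
  ultimately show ?thesis using crd_unique[OF ind, of ?c "B ! i" r] r by simp
qed

lemma crd_lin:
  assumes ind: "indep K B" and u: "u \<in> spanl K B" and v: "v \<in> spanl K B" and k: "k \<in> K"
    and r: "r < length B"
  shows "crd B (k * u + v) r = k * crd B u r + crd B v r"
proof -
  note cu = crd_props[OF u] and cv = crd_props[OF v]
  let ?c = "\<lambda>r. k * crd B u r + crd B v r"
  have "k * u + v = (\<Sum>r<length B. ?c r * B ! r)"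
    apply (subst cu(2)) apply (subst cv(2))
    by (simp add: sum_distrib_left sum.distrib distrib_right mult.assoc)
  moreover have "\<forall>r. ?c r \<in> K" using cu(1) cv(1) k Kadd[OF sf] Kmul[OF sf] by blast
  ultimately show ?thesis using crd_unique[OF ind, of ?c "k * u + v" r] r by blast
qed

lemma crd_zero_span:
  assumes ind: "indep K B" and r: "r < length B" and S: "set S \<subseteq> spanl K B"
    and z: "\<forall>s\<in>set S. crd B s r = 0" and v: "v \<in> spanl K S"
  shows "crd B v r = 0"
  using S z v
proof (induction S arbitrary: v)
  case Nil
  then have "v = 0" by simp
  moreover have "crd B 0 r = 0"
    using crd_unique[OF ind, of "\<lambda>_. 0" 0 r] r K0[OF sf] by simp
  ultimately show ?case by simp
next
  case (Cons s S)
  then obtain c v1 where v: "v = c * s + v1" "c \<in> K" "v1 \<in> spanl K S" by auto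
  have v1B: "v1 \<in> spanl K B" using span_sub[OF sf, of S B] Cons.prems(1) v(3) by auto
  have "crd B v r = c * crd B s r + crd B v1 r"
    using crd_lin[OF ind _ v1B v(2) r, of s] Cons.prems(1) v(1) by simp
  also have "\<dots> = 0" using Cons by (simp add: v)
  finally show ?case .
qed

end

definition sg :: "nat \<Rightarrow> nat \<Rightarrow> int \<Rightarrow> 'a::field \<Rightarrow> 'a" where
  "sg m d a z = frob m (a * int d) z"

definition Ea :: "nat \<Rightarrow> nat \<Rightarrow> int \<Rightarrow> 'a::field list \<Rightarrow> 'a list \<Rightarrow> 'a" where
  "Ea m d a xs ys = sum_list (map (\<lambda>(u, v). u * sg m d a v + sg m d a u * v) (zip xs ys))"

lemma Ea_Nil [simp]: "Ea m d a [] ys = 0" "Ea m d a xs [] = 0" by (simp_all add: Ea_def)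

lemma Ea_Cons [simp]: "Ea m d a (u # xs) (v # ys) = u * sg m d a v + sg m d a u * v + Ea m d a xs ys"
  by (simp add: Ea_def)

locale FF =
  fixes K :: "'a::field set" and m d e :: nat
  assumes ch: "(1::'a) + 1 = 0" and fe: "\<And>z::'a. z ^ (2 ^ m) = z" and mpos: "m > 0"
    and g: "gcd m d = e" and Kdef: "K = Kf e"
begin

lemma sfK: "subf K" using subf_Kf[OF ch] Kdef by simp

lemma edvd: "e dvd m" "e dvd d" using g by auto

lemma sgK: "c \<in> K \<Longrightarrow> sg m d a c = c"
  unfolding sg_def using frob_K[of c e m "a * int d"] Kdef edvd mpos by simp

lemma sg_add: "sg m d a ((x::'a) + y) = sg m d a x + sg m d a y"
  unfolding sg_def by (rule frob_add[OF ch])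

lemma sg_mult: "sg m d a ((x::'a) * y) = sg m d a x * sg m d a y"
  unfolding sg_def by (rule frob_mult)

lemma sg_sum: "sg m d a (\<Sum>i\<in>A. (f i::'a)) = (\<Sum>i\<in>A. sg m d a (f i))"
  unfolding sg_def by (rule frob_sum[OF ch])

lemma sg_expand:
  assumes "v \<in> spanl K B"
  shows "sg m d a v = (\<Sum>r<length B. crd K B v r * sg m d a (B ! r))"
proof -
  note cp = crd_props[OF sfK assms]
  have "sg m d a v = sg m d a (\<Sum>r<length B. crd K B v r * B ! r)" using cp(2) by simp
  also have "\<dots> = (\<Sum>r<length B. crd K B v r * sg m d a (B ! r))"
    using cp(1) by (simp add: sg_sum sg_mult sgK)
  finally show ?thesis .
qed

lemma pairs_expand:
  assumes "\<forall>(p, g)\<in>set P. g \<in> spanl K B"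
  shows "sum_list (map (\<lambda>(p, g). p * sg m d a g) P)
       = (\<Sum>r<length B. sum_list (map (\<lambda>(p, g). p * crd K B g r) P) * sg m d a (B ! r))"
  using assms
proof (induction P)
  case Nil then show ?case by simp
next
  case (Cons pg P)
  obtain p g where pg: "pg = (p, g)" by fastforce
  have gs: "g \<in> spanl K B" using Cons.prems pg by auto
  have "sum_list (map (\<lambda>(p, g). p * sg m d a g) (pg # P))
      = p * sg m d a g + sum_list (map (\<lambda>(p, g). p * sg m d a g) P)" by (simp add: pg)
  also have "\<dots> = (\<Sum>r<length B. p * crd K B g r * sg m d a (B ! r))
      + (\<Sum>r<length B. sum_list (map (\<lambda>(p, g). p * crd K B g r) P) * sg m d a (B ! r))"
    using Cons sg_expand[OF gs, of a] by (simp add: sum_distrib_left mult.assoc)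
  also have "\<dots> = (\<Sum>r<length B. sum_list (map (\<lambda>(p, g). p * crd K B g r) (pg # P)) * sg m d a (B ! r))"
    by (simp add: pg sum.distrib[symmetric] distrib_right)
  finally show ?case .
qed

lemma moore_pairs:
  assumes ind: "indep K B" and P: "\<forall>(p, g)\<in>set P. g \<in> spanl K B"
    and W: "\<And>a. a0 \<le> a \<Longrightarrow> a < a0 + int (length B) \<Longrightarrow> sum_list (map (\<lambda>(p, g). p * sg m d a g) P) = 0"
    and r: "r < length B"
  shows "sum_list (map (\<lambda>(p, g). p * crd K B g r) P) = 0"
proof -
  have "indepf (Kf e) (length B) (\<lambda>r. B ! r)" using indep_indepf[OF sfK ind] Kdef by simp
  moreover have "\<And>a. a0 \<le> a \<Longrightarrow> a < a0 + int (length B) \<Longrightarrow>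
     (\<Sum>r<length B. sum_list (map (\<lambda>(p, g). p * crd K B g r) P) * frob m (a * int d) (B ! r)) = 0"
    using W pairs_expand[OF P] unfolding sg_def by metis
  ultimately show ?thesis
    using moore[OF ch fe mpos g, of "length B" "\<lambda>r. B ! r" a0 "\<lambda>r. sum_list (map (\<lambda>(p, g). p * crd K B g r) P)" r] r
    by blast
qed

end


definition pairs :: "'a list \<Rightarrow> 'a list \<Rightarrow> ('a \<times> 'a) list" where
  "pairs X Y = concat (map (\<lambda>(u, v). [(u, v), (v, u)]) (zip X Y))"

lemma pairs_Cons [simp]: "pairs (u # X) (v # Y) = (u, v) # (v, u) # pairs X Y"
  by (simp add: pairs_def)
lemma pairs_Nil [simp]: "pairs [] Y = []" "pairs X [] = []" by (simp_all add: pairs_def)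

lemma pairs_set: "(p, g) \<in> set (pairs X Y) \<Longrightarrow> g \<in> set X \<union> set Y"
  unfolding pairs_def by (auto dest: set_zip_leftD set_zip_rightD)

lemma pairs_fsum:
  "sum_list (map (\<lambda>(p, g). p * f g) (pairs X Y)) = sum_list (map (\<lambda>(u, v). u * f v + v * f (u::'a::comm_ring)) (zip X Y))"
proof (induction X arbitrary: Y)
  case Nil then show ?case by simp
next
  case (Cons u X) then show ?case by (cases Y) (auto simp: algebra_simps)
qed

lemma zipsum_zero:
  assumes "\<forall>u\<in>set X. f u = (0::'a::comm_ring)"
  shows "sum_list (map (\<lambda>(u, v). u * f v + v * f u) (zip X Y)) = sum_list (map (\<lambda>(u, v). u * f v) (zip X Y))"
  using assms
proof (induction X arbitrary: Y)
  case Nil then show ?case by simp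
next
  case (Cons u X) then show ?case by (cases Y) auto
qed

definition e1 :: "nat \<Rightarrow> nat \<Rightarrow> int \<Rightarrow> 'a::field \<Rightarrow> 'a \<Rightarrow> 'a" where
  "e1 m d a u v = u * sg m d a v + sg m d a u * v"

lemma Ea_Cons': "Ea m d a (u # xs) (v # ys) = e1 m d a u v + Ea m d a xs ys"
  by (simp add: e1_def)

context
  fixes K :: "'a::field set"
  assumes sf: "subf K"
begin

lemma combo_span:
  assumes "\<forall>v\<in>set Y. f v \<in> K"
  shows "sum_list (map (\<lambda>(u, v). u * f v) (zip X Y)) \<in> spanl K X"
  using assms
proof (induction X arbitrary: Y)
  case Nil then show ?case by simp
next
  case (Cons b X)
  show ?case
  proof (cases Y)
    case Nil then show ?thesis using span_0[OF sf, of "b # X"] by simp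
  next
    case (Cons v Y')
    then have "f v \<in> K" "sum_list (map (\<lambda>(u, v). u * f v) (zip X Y')) \<in> spanl K X"
      using Cons.prems Cons.IH by auto
    then have "b * f v + sum_list (map (\<lambda>(u, v). u * f v) (zip X Y')) = f v * b + sum_list (map (\<lambda>(u, v). u * f v) (zip X Y'))
       \<and> f v \<in> K \<and> sum_list (map (\<lambda>(u, v). u * f v) (zip X Y')) \<in> spanl K X" by (simp add: mult.commute)
    then show ?thesis unfolding \<open>Y = v # Y'\<close> by (simp only: list.map zip_Cons_Cons sum_list.Cons spanl.simps prod.case mem_Collect_eq) blast
  qed
qed

end

context FF
begin

lemma sg0 [simp]: "sg m d a 0 = 0" unfolding sg_def by simp

lemma pairs_Ea: "sum_list (map (\<lambda>(p, g). p * sg m d a g) (pairs X Y)) = Ea m d a X Y"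
proof (induction X arbitrary: Y)
  case Nil then show ?case by simp
next
  case (Cons u X) then show ?case by (cases Y) (auto simp: algebra_simps)
qed

lemma Z1:
  assumes "v \<in> spanl K x"
  shows "\<exists>y. length y = length x \<and> (\<forall>a. Ea m d a x y = e1 m d a v z)"
  using assms
proof (induction x arbitrary: v)
  case Nil then show ?case by (intro exI[of _ "[]"]) (simp add: e1_def)
next
  case (Cons b x)
  then obtain c v1 where v: "v = c * b + v1" "c \<in> K" "v1 \<in> spanl K x" by auto
  then obtain y1 where y1: "length y1 = length x" "\<forall>a. Ea m d a x y1 = e1 m d a v1 z" using Cons.IH by blast
  have "\<forall>a. Ea m d a (b # x) ((c * z) # y1) = e1 m d a v z"
  proof
    fix a
    show "Ea m d a (b # x) ((c * z) # y1) = e1 m d a v z"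
      using y1 v(2) unfolding v(1) e1_def
      by (simp add: sg_add sg_mult sgK algebra_simps)
  qed
  then show ?case using y1 by (intro exI[of _ "(c * z) # y1"]) simp
qed

lemma ZSUB:
  assumes lx: "length x = L" and ly: "length y = L" and wn: "w \<notin> spanl K x"
    and win: "\<And>a. a0 \<le> a \<Longrightarrow> a < a0 + int W \<Longrightarrow> Ea m d a (w # x) (z # y) = 0"
    and LW: "2 * L + 2 \<le> W"
  shows "z \<in> spanl K (w # x)"
proof (rule ccontr)
  assume zn: "z \<notin> spanl K (w # x)"
  obtain A where A: "indep K A" "spanl K A = spanl K x" "length A \<le> length x"
    using basis_ex[OF sfK] by blast
  let ?B0 = "z # w # A"
  have swA: "spanl K (w # A) = spanl K (w # x)" using A(2) by simp
  have ind0: "indep K ?B0" using A wn zn swA by simp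
  obtain E where E: "indep K (E @ ?B0)" "set y \<subseteq> spanl K (E @ ?B0)" "length E \<le> length y"
    using extend_ex[OF sfK ind0] by blast
  define B where "B = E @ ?B0"
  define r0 where "r0 = length E"
  have lenB: "length B = r0 + 2 + length A" by (simp add: B_def r0_def)
  have B0sub: "spanl K ?B0 \<subseteq> spanl K B" unfolding B_def by (rule span_append_sub[OF sfK])
  have wAsub: "spanl K (w # A) \<subseteq> spanl K B" using B0sub span_cons_sub[OF sfK, of "w # A" z] by blast
  have Bz: "B ! r0 = z" by (simp add: B_def r0_def)
  have setX: "set (w # x) \<subseteq> spanl K B"
    using wAsub swA span_set[OF sfK, of "w # x"] by blast
  have "z \<in> spanl K ?B0" by (rule span_head[OF sfK])
  then have zB: "z \<in> spanl K B" using B0sub by (rule subsetD[rotated])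
  have yB: "set y \<subseteq> spanl K B" using E(2) unfolding B_def .
  have setY: "set (z # y) \<subseteq> spanl K B"
    using zB yB by simp
  define P where "P = pairs (w # x) (z # y)"
  have Pspan: "\<forall>(p, g)\<in>set P. g \<in> spanl K B"
  proof (clarify)
    fix p g assume "(p, g) \<in> set P"
    then have "g \<in> set (w # x) \<union> set (z # y)" unfolding P_def by (rule pairs_set)
    then show "g \<in> spanl K B" using setX setY by blast
  qed
  have r0B: "r0 < length B" using lenB by simp
  have M: "sum_list (map (\<lambda>(p, g). p * crd K B g r0) P) = 0"
  proof (rule moore_pairs[OF _ Pspan _ r0B, of a0])
    show "indep K B" using E(1) by (simp add: B_def)
    fix a assume a1: "a0 \<le> a" and a2: "a < a0 + int (length B)"
    have "length B \<le> W" using lenB A(3) E(3) lx ly LW r0_def by simp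
    then have "a < a0 + int W" using a2 by linarith
    then show "sum_list (map (\<lambda>(p, g). p * sg m d a g) P) = 0"
      using win[of a] a1 pairs_Ea[of a "w # x" "z # y"] unfolding P_def by simp
  qed
  have Z0: "\<forall>u\<in>set (w # x). crd K B u r0 = 0"
  proof
    fix u assume u: "u \<in> set (w # x)"
    have "\<forall>s\<in>set (w # A). crd K B s r0 = 0"
    proof
      fix s assume s: "s \<in> set (w # A)"
      then obtain j where j: "j < length (w # A)" "s = (w # A) ! j" by (metis in_set_conv_nth)
      have "B ! (r0 + 1 + j) = s" using j by (simp add: B_def r0_def nth_append)
      moreover have "r0 + 1 + j < length B" using j lenB by simp
      ultimately show "crd K B s r0 = 0"
        using crd_basis[OF sfK _ _ r0B, of "r0 + 1 + j"] E(1) by (simp add: B_def)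
    qed
    moreover have "u \<in> spanl K (w # A)" using u swA span_set[OF sfK, of "w # x"] by blast
    moreover have "set (w # A) \<subseteq> spanl K B" using wAsub span_set[OF sfK, of "w # A"] by blast
    moreover have "indep K B" using E(1) by (simp add: B_def)
    ultimately show "crd K B u r0 = 0"
      using crd_zero_span[OF sfK _ r0B, of "w # A" u] by blast
  qed
  have "sum_list (map (\<lambda>(p, g). p * crd K B g r0) P)
      = sum_list (map (\<lambda>(u, v). u * crd K B v r0 + v * crd K B u r0) (zip (w # x) (z # y)))"
    unfolding P_def by (rule pairs_fsum)
  also have "\<dots> = sum_list (map (\<lambda>(u, v). u * crd K B v r0) (zip (w # x) (z # y)))"
    by (rule zipsum_zero[OF Z0])
  finally have S0: "sum_list (map (\<lambda>(u, v). u * crd K B v r0) (zip (w # x) (z # y))) = 0"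
    using M by simp
  have indB: "indep K B" using E(1) by (simp add: B_def)
  have "crd K B (B ! r0) r0 = 1"
    using crd_basis[OF sfK indB r0B r0B] by simp
  then have "crd K B z r0 = 1" using Bz by simp
  with S0 have "w + sum_list (map (\<lambda>(u, v). u * crd K B v r0) (zip x y)) = 0" by simp
  then have "w = - sum_list (map (\<lambda>(u, v). u * crd K B v r0) (zip x y))" by (metis add_eq_0_iff minus_minus)
  moreover have "sum_list (map (\<lambda>(u, v). u * crd K B v r0) (zip x y)) \<in> spanl K x"
  proof (rule combo_span[OF sfK])
    show "\<forall>v\<in>set y. crd K B v r0 \<in> K" using crd_props(1)[OF sfK] setY by auto
  qed
  ultimately have "w \<in> spanl K x" using span_neg[OF sfK] by simp
  then show False using wn by simp
qed

end


definition addl :: "'a::plus list \<Rightarrow> 'a list \<Rightarrow> 'a list" where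
  "addl y y0 = map (\<lambda>(u, v). u + v) (zip y y0)"

lemma length_addl [simp]: "length (addl y y0) = min (length y) (length y0)"
  by (simp add: addl_def)

lemma addl_Cons [simp]: "addl (u # y) (v # y0) = (u + v) # addl y y0"
  by (simp add: addl_def)

locale FFF = FF K m d e for K :: "'a::{field,finite} set" and m d e :: nat +
  fixes s k :: nat
begin

definition goodw :: "'a list \<Rightarrow> 'a list \<Rightarrow> bool" where
  "goodw x y \<longleftrightarrow> (\<forall>a. int k - int s \<le> a \<and> a \<le> int k + int s \<longrightarrow> Ea m d a x y = 0)"

definition Tset :: "'a list \<Rightarrow> 'a list set" where
  "Tset x = {y. length y = length x \<and> goodw x y}"

lemma ch_eq: "(p::'a) + q = 0 \<longleftrightarrow> q = p"
  using minus_ch2[OF ch, of p] by (metis add_eq_0_iff)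

lemma ch_cancel: "(p::'a) + q + q = p"
  using add_self_ch2[OF ch, of q] by (simp add: add.assoc)

lemma Ea_add:
  "length y = length x \<Longrightarrow> length y0 = length x \<Longrightarrow>
     Ea m d a (x::'a list) (addl y y0) = Ea m d a x y + Ea m d a x y0"
proof (induction x arbitrary: y y0)
  case Nil then show ?case by simp
next
  case (Cons u x)
  then obtain v y' v0 y0' where "y = v # y'" "y0 = v0 # y0'" by (metis length_Suc_conv)
  then show ?case using Cons by (simp add: sg_add algebra_simps)
qed

lemma addl_cancel: "length y = length y0 \<Longrightarrow> addl (addl y y0) y0 = (y::'a list)"
proof (induction y arbitrary: y0)
  case Nil then show ?case by (simp add: addl_def)
next
  case (Cons u y) then obtain v y0' where "y0 = v # y0'" by (metis length_Suc_conv)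
  then show ?case using Cons ch_cancel by simp
qed

lemma finite_Tset: "finite (Tset x)"
proof -
  have "Tset x \<subseteq> {y. length y = length x}" by (auto simp: Tset_def)
  then show ?thesis using finite_lists_length_eq[of "UNIV :: 'a set"] finite_subset by auto
qed

lemma Tthm:
  "length x \<le> s \<Longrightarrow> card (Tset x) = card (UNIV :: 'a set) ^ (length x - rk K x) * card K ^ (rk K x * (rk K x + 1) div 2)"
proof (induction x)
  case Nil
  have "Tset [] = {[]}" by (auto simp: Tset_def goodw_def)
  then show ?case by simp
next
  case (Cons w x)
  let ?L = "length x"
  let ?Q = "card (UNIV :: 'a set)"
  let ?q = "card K"
  let ?u = "rk K x"
  define F where "F z = {y. length y = ?L \<and> (\<forall>a. int k - int s \<le> a \<and> a \<le> int k + int s \<longrightarrow> Ea m d a x y = e1 m d a w z)}" for z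
  have IH: "card (Tset x) = ?Q ^ (?L - ?u) * ?q ^ (?u * (?u + 1) div 2)" using Cons by simp
  have ul: "?u \<le> ?L" by (rule rk_le[OF sfK])
  have TF: "Tset (w # x) = (\<lambda>(z, y). z # y) ` (SIGMA z:UNIV. F z)"
  proof (rule set_eqI)
    fix y' show "y' \<in> Tset (w # x) \<longleftrightarrow> y' \<in> (\<lambda>(z, y). z # y) ` (SIGMA z:UNIV. F z)"
    proof (cases y')
      case Nil then show ?thesis by (auto simp: Tset_def)
    next
      case (Cons z y)
      have "z # y \<in> Tset (w # x) \<longleftrightarrow> y \<in> F z"
        by (auto simp: Tset_def F_def goodw_def ch_eq e1_def)
      moreover have "z # y \<in> (\<lambda>(z, y). z # y) ` (SIGMA z:UNIV. F z) \<longleftrightarrow> y \<in> F z"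
        by auto
      ultimately show ?thesis using Cons by simp
    qed
  qed
  have finF: "finite (F z)" for z
  proof -
    have "F z \<subseteq> {y. length y = ?L}" by (auto simp: F_def)
    then show ?thesis using finite_lists_length_eq[of "UNIV :: 'a set"] finite_subset by auto
  qed
  have "card (Tset (w # x)) = card (SIGMA z:UNIV. F z)"
    unfolding TF by (rule card_image) (auto simp: inj_on_def)
  also have "\<dots> = (\<Sum>z\<in>UNIV. card (F z))" using finF by (simp add: card_SigmaI)
  finally have c1: "card (Tset (w # x)) = (\<Sum>z\<in>UNIV. card (F z))" .
  have fib: "card (F z) = card (Tset x)" if ne: "F z \<noteq> {}" for z
  proof -
    obtain y0 where y0: "y0 \<in> F z" using ne by blast
    have "F z = (\<lambda>y. addl y y0) ` Tset x"
    proof (rule set_eqI, rule iffI)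
      fix y' assume y': "y' \<in> F z"
      have "addl y' y0 \<in> Tset x"
        using y' y0 Ea_add[of y' x y0] by (auto simp: F_def Tset_def goodw_def add_self_ch2[OF ch])
      moreover have "addl (addl y' y0) y0 = y'" using y' y0 by (intro addl_cancel) (simp add: F_def)
      ultimately show "y' \<in> (\<lambda>y. addl y y0) ` Tset x" by (metis imageI)
    next
      fix y' assume "y' \<in> (\<lambda>y. addl y y0) ` Tset x"
      then obtain y where y: "y \<in> Tset x" "y' = addl y y0" by blast
      then show "y' \<in> F z"
        using y0 Ea_add[of y x y0] by (auto simp: F_def Tset_def goodw_def)
    qed
    moreover have "inj_on (\<lambda>y. addl y y0) (Tset x)"
    proof (rule inj_onI)
      fix y1 y2 assume h: "y1 \<in> Tset x" "y2 \<in> Tset x" "addl y1 y0 = addl y2 y0"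
      have l: "length y1 = length y0" "length y2 = length y0"
        using h(1,2) y0 by (simp_all add: F_def Tset_def)
      have "y1 = addl (addl y1 y0) y0" using addl_cancel[OF l(1)] by simp
      also have "\<dots> = addl (addl y2 y0) y0" using h(3) by simp
      also have "\<dots> = y2" using addl_cancel[OF l(2)] by simp
      finally show "y1 = y2" .
    qed
    ultimately show ?thesis by (simp add: card_image)
  qed
  define Z where "Z = {z. F z \<noteq> {}}"
  have "(\<Sum>z\<in>UNIV. card (F z)) = (\<Sum>z\<in>UNIV. if z \<in> Z then card (Tset x) else 0)"
    by (rule sum.cong) (auto simp: Z_def fib)
  also have "\<dots> = card Z * card (Tset x)" by (simp add: sum.If_cases)
  finally have c2: "card (Tset (w # x)) = card Z * card (Tset x)" using c1 by simp
  show ?case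
  proof (cases "w \<in> spanl K x")
    case True
    have "Z = UNIV"
    proof (rule set_eqI)
      fix z
      obtain y where "length y = ?L" "\<forall>a. Ea m d a x y = e1 m d a w z" using Z1[OF True] by blast
      then have "y \<in> F z" by (simp add: F_def)
      then show "z \<in> Z \<longleftrightarrow> z \<in> UNIV" by (auto simp: Z_def)
    qed
    then have "card (Tset (w # x)) = ?Q * card (Tset x)" using c2 by simp
    moreover have "?Q * ?Q ^ (?L - ?u) = ?Q ^ (Suc ?L - ?u)" using ul by (simp add: Suc_diff_le)
    ultimately show ?thesis using IH True by (simp add: mult.assoc)
  next
    case False
    have "Z = spanl K (w # x)"
    proof (rule set_eqI, rule iffI)
      fix z assume "z \<in> Z"
      then obtain y where y: "y \<in> F z" by (auto simp: Z_def)
      show "z \<in> spanl K (w # x)"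
      proof (rule ZSUB[OF refl _ False, of y "int k - int s" "2 * s + 1" z])
        show "length y = length x" using y by (simp add: F_def)
        show "2 * length x + 2 \<le> 2 * s + 1" using Cons.prems by simp
        fix a assume "int k - int s \<le> a" "a < int k - int s + int (2 * s + 1)"
        then have "Ea m d a x y = e1 m d a w z" using y by (simp add: F_def)
        then show "Ea m d a (w # x) (z # y) = 0" by (simp only: Ea_Cons' ch_eq)
      qed
    next
      fix z assume "z \<in> spanl K (w # x)"
      then obtain c v where cv: "z = c * w + v" "c \<in> K" "v \<in> spanl K x" by auto
      obtain y where y: "length y = ?L" "\<forall>a. Ea m d a x y = e1 m d a v w" using Z1[OF cv(3)] by blast
      have "e1 m d a w z = e1 m d a v w" for a
      proof -
        have "e1 m d a w z = c * (w * sg m d a w + sg m d a w * w) + e1 m d a v w"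
          unfolding cv(1) e1_def using cv(2) by (simp add: sg_add sg_mult sgK algebra_simps)
        also have "w * sg m d a w + sg m d a w * w = 0"
          using add_self_ch2[OF ch, of "w * sg m d a w"] by (simp add: mult.commute)
        finally show ?thesis by simp
      qed
      then have "y \<in> F z" using y by (simp add: F_def)
      then show "z \<in> Z" by (auto simp: Z_def)
    qed
    then have "card Z = card (spanl K (w # x))" by (simp only:)
    also have "\<dots> = ?q ^ rk K (w # x)" by (rule card_span[OF sfK]) simp
    also have "rk K (w # x) = Suc ?u" using False by simp
    finally have "card Z = ?q ^ Suc ?u" .
    then have "card (Tset (w # x)) = ?q ^ Suc ?u * (?Q ^ (?L - ?u) * ?q ^ (?u * (?u + 1) div 2))"
      using c2 IH by simp
    also have "\<dots> = ?Q ^ (Suc ?L - Suc ?u) * ?q ^ (Suc ?u * (Suc ?u + 1) div 2)"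
    proof -
      have "Suc ?u * (Suc ?u + 1) div 2 = ?u * (?u + 1) div 2 + Suc ?u" by simp
      then show ?thesis by (simp add: power_add)
    qed
    finally show ?thesis using False by simp
  qed
qed

end


lemma gb_0 [simp]: "gauss_binom q a 0 = 1" by (simp add: gauss_binom_def)

lemma gb_zero_base: "gauss_binom q 0 u = (if u = 0 then 1 else 0)"
  by (simp add: gauss_binom_def)

lemma gb_formula:
  assumes "v \<le> L"
  shows "gauss_binom q L (Suc v) =
     (\<Prod>j<v. (q ^ (L - j) - 1)) * (q ^ (L - v) - 1) / ((\<Prod>j<v. (q ^ (j + 1) - 1)) * (q ^ (Suc v) - 1))"
proof (cases "Suc v \<le> L")
  case True then show ?thesis by (simp add: gauss_binom_def)
next
  case False
  then have "v = L" using assms by simp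
  then show ?thesis using False by (simp add: gauss_binom_def)
qed

lemma gb_pascal:
  fixes q :: real
  assumes q: "q > 1"
  shows "gauss_binom q (Suc L) (Suc v) = q ^ Suc v * gauss_binom q L (Suc v) + gauss_binom q L v"
proof (cases "v \<le> L")
  case False
  then show ?thesis by (simp add: gauss_binom_def)
next
  case True
  define N where "N = (\<Prod>j<v. (q ^ (L - j) - 1))"
  define D where "D = (\<Prod>j<v. (q ^ (j + 1) - 1))"
  have qpos: "q ^ n > 1" if "n > 0" for n :: nat using q that by (simp add: one_less_power)
  have Dnz: "D \<noteq> 0" unfolding D_def
  proof -
    have "q ^ (j + 1) - 1 \<noteq> 0" for j using qpos[of "j + 1"] by simp
    then show "(\<Prod>j<v. (q ^ (j + 1) - 1)) \<noteq> 0" by (simp add: prod_zero_iff del: power_Suc)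
  qed
  have d1: "q ^ Suc v - 1 \<noteq> 0" using qpos[of "Suc v"] by simp
  have lhs: "gauss_binom q (Suc L) (Suc v) = (q ^ Suc L - 1) * N / (D * (q ^ Suc v - 1))"
  proof -
    have "(\<Prod>j<Suc v. (q ^ (Suc L - j) - 1)) = (q ^ Suc L - 1) * N"
      unfolding N_def by (simp only: prod.lessThan_Suc_shift) simp
    moreover have "(\<Prod>j<Suc v. (q ^ (j + 1) - 1)) = D * (q ^ Suc v - 1)"
      unfolding D_def by simp
    ultimately show ?thesis using True by (simp add: gauss_binom_def)
  qed
  have r1: "gauss_binom q L (Suc v) = N * (q ^ (L - v) - 1) / (D * (q ^ Suc v - 1))"
    using gb_formula[OF True] by (simp add: N_def D_def)
  have r2: "gauss_binom q L v = N / D" using True by (simp add: gauss_binom_def N_def D_def)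
  have qq: "q ^ Suc v * q ^ (L - v) = q ^ Suc L"
    using True by (simp add: power_add[symmetric])
  have "q ^ Suc v * (N * (q ^ (L - v) - 1) / (D * (q ^ Suc v - 1))) + N / D
      = N * (q ^ Suc v * q ^ (L - v) - q ^ Suc v + (q ^ Suc v - 1)) / (D * (q ^ Suc v - 1))"
    using Dnz d1 by (simp add: field_simps)
  also have "\<dots> = (q ^ Suc L - 1) * N / (D * (q ^ Suc v - 1))" using qq by (simp add: mult.commute)
  finally show ?thesis using lhs r1 r2 by simp
qed

context FFF
begin

definition cnt :: "nat \<Rightarrow> nat \<Rightarrow> nat" where
  "cnt L u = card {x :: 'a list. length x = L \<and> rk K x = u}"

lemma finite_lists: "finite {x :: 'a list. length x = L}"
  using finite_lists_length_eq[of "UNIV :: 'a set"] by simp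

lemma card_span_le: "card (spanl K (x :: 'a list)) \<le> card (UNIV :: 'a set)"
  by (rule card_mono) auto

lemma cnt_0: "cnt 0 u = (if u = 0 then 1 else 0)"
proof -
  have "{x :: 'a list. length x = 0 \<and> rk K x = u} = (if u = 0 then {[]} else {})" by auto
  then show ?thesis by (simp add: cnt_def)
qed

lemma cnt_Suc:
  "real (cnt (Suc L) u) = real (card K) ^ u * real (cnt L u)
     + (if u > 0 then (real (card (UNIV :: 'a set)) - real (card K) ^ (u - 1)) * real (cnt L (u - 1)) else 0)"
proof -
  let ?Q = "card (UNIV :: 'a set)"
  let ?q = "card K"
  let ?S = "{x :: 'a list. length x = L}"
  define G where "G x = {w. rk K (w # x) = u}" for x :: "'a list"
  have eq: "{x :: 'a list. length x = Suc L \<and> rk K x = u} = (\<lambda>(x, w). w # x) ` (SIGMA x:?S. G x)"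
  proof (rule set_eqI)
    fix x' show "x' \<in> {x :: 'a list. length x = Suc L \<and> rk K x = u} \<longleftrightarrow> x' \<in> (\<lambda>(x, w). w # x) ` (SIGMA x:?S. G x)"
      by (cases x') (auto simp: G_def)
  qed
  have finG: "finite (G x)" for x by simp
  have "card {x :: 'a list. length x = Suc L \<and> rk K x = u} = card (SIGMA x:?S. G x)"
    unfolding eq by (rule card_image) (auto simp: inj_on_def)
  also have "\<dots> = (\<Sum>x\<in>?S. card (G x))" using finite_lists by (simp add: card_SigmaI)
  finally have c1: "real (cnt (Suc L) u) = (\<Sum>x\<in>?S. real (card (G x)))" by (simp add: cnt_def)
  have cG: "real (card (G x)) = (if rk K x = u then real ?q ^ u else 0)
      + (if Suc (rk K x) = u then real ?Q - real ?q ^ rk K x else 0)" for x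
  proof (cases "rk K x = u")
    case True
    then have "G x = spanl K x" by (auto simp: G_def)
    then show ?thesis using True card_span[OF sfK] by simp
  next
    case False
    show ?thesis
    proof (cases "Suc (rk K x) = u")
      case True
      then have "G x = UNIV - spanl K x" by (auto simp: G_def)
      then have "card (G x) = ?Q - card (spanl K x)" by (simp add: card_Diff_subset)
      then have "real (card (G x)) = real ?Q - real (card (spanl K x))"
        using card_span_le[of x] by (simp add: of_nat_diff)
      then show ?thesis using True card_span[OF sfK] by simp
    next
      case False2: False
      then have "G x = {}" using False by (auto simp: G_def)
      then show ?thesis using False False2 by simp
    qed
  qed
  have s1: "(\<Sum>x\<in>?S. (if rk K x = u then real ?q ^ u else 0)) = real ?q ^ u * real (cnt L u)"
  proof -
    have "(\<Sum>x\<in>?S. (if rk K x = u then real ?q ^ u else 0)) = (\<Sum>x\<in>?S \<inter> {x. rk K x = u}. real ?q ^ u)"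
      using finite_lists by (simp only: sum.If_cases) simp
    also have "?S \<inter> {x. rk K x = u} = {x. length x = L \<and> rk K x = u}" by auto
    also have "(\<Sum>x\<in>{x. length x = L \<and> rk K x = u}. real ?q ^ u) = real ?q ^ u * real (cnt L u)"
      by (simp add: cnt_def)
    finally show ?thesis .
  qed
  have s2: "(\<Sum>x\<in>?S. (if Suc (rk K x) = u then real ?Q - real ?q ^ rk K x else 0))
      = (if u > 0 then (real ?Q - real ?q ^ (u - 1)) * real (cnt L (u - 1)) else 0)"
  proof (cases u)
    case 0 then show ?thesis by simp
  next
    case (Suc v)
    have "(\<Sum>x\<in>?S. (if Suc (rk K x) = u then real ?Q - real ?q ^ rk K x else 0))
        = (\<Sum>x\<in>?S. (if rk K x = v then real ?Q - real ?q ^ v else 0))"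
      by (rule sum.cong) (auto simp: Suc)
    also have "\<dots> = (\<Sum>x\<in>?S \<inter> {x. rk K x = v}. real ?Q - real ?q ^ v)"
      using finite_lists by (simp only: sum.If_cases) simp
    also have "?S \<inter> {x. rk K x = v} = {x. length x = L \<and> rk K x = v}" by auto
    also have "(\<Sum>x\<in>{x. length x = L \<and> rk K x = v}. real ?Q - real ?q ^ v) = (real ?Q - real ?q ^ v) * real (cnt L v)"
      by (simp add: cnt_def)
    finally show ?thesis using Suc by simp
  qed
  show ?thesis using c1 s1 s2 cG by (simp add: sum.distrib)
qed

end


context FFF
begin

lemma cnt_closed:
  assumes q1: "card K > 1"
  shows "real (cnt L u) = gauss_binom (real (card K)) L u * (\<Prod>j<u. (real (card (UNIV :: 'a set)) - real (card K) ^ j))"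
proof (induction L arbitrary: u)
  case 0 then show ?case by (simp add: cnt_0 gb_zero_base)
next
  case (Suc L)
  let ?q = "real (card K)" and ?Q = "real (card (UNIV :: 'a set))"
  show ?case
  proof (cases u)
    case 0 then show ?thesis using cnt_Suc[of L 0] Suc[of 0] by simp
  next
    case (Suc v)
    have q: "?q > 1" using q1 by simp
    have "real (cnt (Suc L) u) = ?q ^ Suc v * real (cnt L (Suc v)) + (?Q - ?q ^ v) * real (cnt L v)"
      using cnt_Suc[of L u] Suc by simp
    also have "\<dots> = (\<Prod>j<Suc v. (?Q - ?q ^ j)) * (?q ^ Suc v * gauss_binom ?q L (Suc v) + gauss_binom ?q L v)"
    proof -
      define PP where "PP = (\<Prod>j<v. (?Q - ?q ^ j))"
      have P: "(\<Prod>j<Suc v. (?Q - ?q ^ j)) = PP * (?Q - ?q ^ v)" by (simp add: PP_def)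
      have I1: "real (cnt L (Suc v)) = gauss_binom ?q L (Suc v) * (PP * (?Q - ?q ^ v))"
        using Suc.IH[of "Suc v"] P by simp
      have I2: "real (cnt L v) = gauss_binom ?q L v * PP" using Suc.IH[of v] by (simp add: PP_def)
      show ?thesis unfolding I1 I2 P by (simp add: algebra_simps)
    qed
    also have "\<dots> = (\<Prod>j<Suc v. (?Q - ?q ^ j)) * gauss_binom ?q (Suc L) (Suc v)"
      using gb_pascal[OF q] by simp
    finally show ?thesis using Suc by (simp add: mult.commute)
  qed
qed

lemma pairs_count:
  assumes L: "L \<le> s" and q1: "card K > 1"
  shows "real (card {(x, y). length x = L \<and> length y = L \<and> goodw x y}) =
    (\<Sum>u=0..L. gauss_binom (real (card K)) L u * (\<Prod>j<u. (real (card (UNIV :: 'a set)) - real (card K) ^ j))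
       * real (card (UNIV :: 'a set)) ^ (L - u) * real (card K) ^ (u * (u + 1) div 2))"
proof -
  let ?S = "{x :: 'a list. length x = L}"
  let ?Q = "card (UNIV :: 'a set)" and ?q = "card K"
  have "{(x, y). length x = L \<and> length y = L \<and> goodw x y} = (SIGMA x:?S. Tset x)"
    by (auto simp: Tset_def)
  then have "card {(x, y). length x = L \<and> length y = L \<and> goodw x y} = (\<Sum>x\<in>?S. card (Tset x))"
    using finite_lists finite_Tset by (simp add: card_SigmaI)
  also have "\<dots> = (\<Sum>x\<in>?S. ?Q ^ (L - rk K x) * ?q ^ (rk K x * (rk K x + 1) div 2))"
    by (rule sum.cong) (use Tthm L in auto)
  also have "\<dots> = (\<Sum>u\<in>{0..L}. \<Sum>x\<in>{x. x \<in> ?S \<and> rk K x = u}. ?Q ^ (L - rk K x) * ?q ^ (rk K x * (rk K x + 1) div 2))"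
    by (rule sum.group[symmetric]) (use finite_lists rk_le[OF sfK] in auto)
  also have "\<dots> = (\<Sum>u\<in>{0..L}. cnt L u * (?Q ^ (L - u) * ?q ^ (u * (u + 1) div 2)))"
  proof (rule sum.cong[OF refl])
    fix u
    have "(\<Sum>x\<in>{x. x \<in> ?S \<and> rk K x = u}. ?Q ^ (L - rk K x) * ?q ^ (rk K x * (rk K x + 1) div 2))
       = (\<Sum>x\<in>{x. length x = L \<and> rk K x = u}. ?Q ^ (L - u) * ?q ^ (u * (u + 1) div 2))"
      by (rule sum.cong) auto
    then show "(\<Sum>x\<in>{x. x \<in> ?S \<and> rk K x = u}. ?Q ^ (L - rk K x) * ?q ^ (rk K x * (rk K x + 1) div 2))
       = cnt L u * (?Q ^ (L - u) * ?q ^ (u * (u + 1) div 2))" by (simp add: cnt_def)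
  qed
  finally have "real (card {(x, y). length x = L \<and> length y = L \<and> goodw x y})
     = (\<Sum>u\<in>{0..L}. real (cnt L u) * (real ?Q ^ (L - u) * real ?q ^ (u * (u + 1) div 2)))"
    by (simp only: of_nat_sum of_nat_mult of_nat_power)
  also have "\<dots> = (\<Sum>u=0..L. gauss_binom (real ?q) L u * (\<Prod>j<u. (real ?Q - real ?q ^ j))
       * real ?Q ^ (L - u) * real ?q ^ (u * (u + 1) div 2))"
    by (rule sum.cong[OF refl]) (simp add: cnt_closed[OF q1] mult.assoc)
  finally show ?thesis .
qed

end


lemma roots_bound_poly:
  fixes f :: "'a::field \<Rightarrow> 'a"
  assumes "p \<noteq> 0" "degree p \<le> D" "\<And>z. f z = poly p z"
  shows "card {z. f z = 0} \<le> D"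
  using card_poly_roots_bound[OF assms(1)] assms(2,3) by simp

lemma card_Kf:
  fixes dummy :: "'a::{field,finite}"
  assumes ch: "(1::'a) + 1 = 0" and fe: "\<And>z::'a. z ^ (2 ^ m) = z"
    and card: "card (UNIV :: 'a set) = 2 ^ m" and e: "e > 0" "e dvd m" and m: "m > 0"
  shows "card (Kf e :: 'a set) = 2 ^ e"
proof -
  let ?K = "Kf e :: 'a set"
  obtain N where N: "m = e * N" using e by blast
  have N1: "N \<ge> 1" using N m by (cases N) auto
  have up: "card ?K \<le> 2 ^ e"
  proof -
    let ?p = "monom (1::'a) (2 ^ e) - monom 1 1"
    have "(2::nat) \<le> 2 ^ e" using power_increasing[of 1 e "2::nat"] e by simp
    then have e1: "(2::nat) ^ e \<noteq> 1" by linarith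
    have e2: "Suc 0 \<noteq> 2 ^ e" using e1 by (metis One_nat_def)
    have c: "coeff ?p (2 ^ e) = 1" using e2 by simp
    have "?p \<noteq> 0" using c by (metis coeff_0 zero_neq_one)
    moreover have "degree ?p \<le> 2 ^ e"
    proof (rule order.trans[OF degree_diff_le_max])
      have "degree (monom (1::'a) 1) \<le> 1" by (rule degree_monom_le)
      also have "1 \<le> (2::nat) ^ e" by simp
      finally show "max (degree (monom (1::'a) (2 ^ e))) (degree (monom (1::'a) 1)) \<le> 2 ^ e"
        using degree_monom_le[of "1::'a" "2 ^ e"] by simp
    qed
    moreover have "?K = {z. poly ?p z = 0}" by (auto simp: Kf_def poly_monom)
    ultimately show ?thesis using card_poly_roots_bound[of ?p] by simp
  qed
  define psi where "psi z = z ^ (2 ^ e) + z" for z :: 'a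
  define T where "T z = (\<Sum>j<N. z ^ (2 ^ (e * j)))" for z :: 'a
  have psi_add: "psi (x + y) = psi x + psi y" for x y
    unfolding psi_def pow2_add[OF ch] by (simp only: add_ac)
  have ceq: "p + q = 0 \<longleftrightarrow> p = q" for p q :: 'a
    using add_eq_0_iff[of p q] minus_ch2[OF ch, of p] by auto
  have kerK: "psi k = 0 \<longleftrightarrow> k \<in> ?K" for k
    unfolding psi_def Kf_def using ceq by simp
  have Tpsi: "T (psi z) = 0" for z
  proof -
    have "T (psi z) = (\<Sum>j<N. z ^ (2 ^ (e * Suc j)) + z ^ (2 ^ (e * j)))"
      unfolding T_def psi_def
      by (rule sum.cong) (simp_all add: pow2_add[OF ch] power_mult[symmetric] power_add[symmetric] algebra_simps)
    also have "\<dots> = (\<Sum>j<N. z ^ (2 ^ (e * Suc j)) - z ^ (2 ^ (e * j)))"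
      by (rule sum.cong[OF refl]) (rule diff_ch2[OF ch, symmetric])
    also have "\<dots> = z ^ (2 ^ (e * N)) - z ^ (2 ^ (e * 0))" by (rule sum_lessThan_telescope)
    also have "\<dots> = 0" using fe N by simp
    finally show ?thesis .
  qed
  have rootsT: "card {z. T z = 0} \<le> 2 ^ (e * (N - 1))"
  proof -
    let ?p = "(\<Sum>j<N. monom (1::'a) (2 ^ (e * j)))"
    have "coeff ?p (2 ^ (e * (N - 1))) = (\<Sum>j<N. if 2 ^ (e * j) = (2::nat) ^ (e * (N - 1)) then 1 else 0)"
      by (simp add: coeff_sum)
    also have "\<dots> = (\<Sum>j<N. if j = N - 1 then 1 else 0)"
      by (rule sum.cong) (use e in auto)
    also have "\<dots> = 1" using N1 by simp
    finally have "?p \<noteq> 0" by (metis coeff_0 zero_neq_one)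
    moreover have "degree ?p \<le> 2 ^ (e * (N - 1))"
    proof (rule degree_sum_le)
      fix j assume "j \<in> {..<N}"
      then have "2 ^ (e * j) \<le> (2::nat) ^ (e * (N - 1))" by (intro power_increasing) auto
      then show "degree (monom (1::'a) (2 ^ (e * j))) \<le> 2 ^ (e * (N - 1))"
        using degree_monom_le order.trans by blast
    qed simp
    moreover have "T z = poly ?p z" for z by (simp add: T_def poly_sum poly_monom)
    ultimately show ?thesis by (rule roots_bound_poly)
  qed
  have fib: "card {z. psi z = v} \<le> card ?K" if vr: "v \<in> range psi" for v
  proof -
    obtain z0 where z0: "v = psi z0" using vr by blast
    have "{z. psi z = v} \<subseteq> (\<lambda>k. z0 + k) ` ?K"
    proof
      fix z assume "z \<in> {z. psi z = v}"
      then have "psi (z + z0) = 0" using z0 psi_add add_self_ch2[OF ch] by simp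
      then have "z + z0 \<in> ?K" using kerK by simp
      moreover have "z = z0 + (z + z0)" using add_self_ch2[OF ch, of z0] by (simp add: algebra_simps)
      ultimately show "z \<in> (\<lambda>k. z0 + k) ` ?K" by blast
    qed
    then have "card {z. psi z = v} \<le> card ((\<lambda>k. z0 + k) ` ?K)" by (rule card_mono[rotated]) simp
    also have "\<dots> \<le> card ?K" by (rule card_image_le) simp
    finally show ?thesis .
  qed
  have "(UNIV :: 'a set) = (\<Union>v\<in>range psi. {z. psi z = v})" by auto
  then have "card (UNIV :: 'a set) \<le> (\<Sum>v\<in>range psi. card {z. psi z = v})"
    using card_UN_le[of "range psi" "\<lambda>v. {z. psi z = v}"] by simp
  also have "\<dots> \<le> (\<Sum>v\<in>range psi. card ?K)" by (rule sum_mono) (rule fib)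
  also have "\<dots> = card (range psi) * card ?K" by simp
  also have "card (range psi) \<le> card {z. T z = 0}" by (rule card_mono) (auto simp: Tpsi)
  then have "card (range psi) * card ?K \<le> 2 ^ (e * (N - 1)) * card ?K"
    using rootsT by (intro mult_right_mono) auto
  finally have lo: "2 ^ m \<le> 2 ^ (e * (N - 1)) * card ?K" using card by simp
  have "(2::nat) ^ m = 2 ^ (e * (N - 1)) * 2 ^ e"
    using N N1 by (simp add: power_add[symmetric] algebra_simps)
  then have "2 ^ e \<le> card ?K" using lo by simp
  then show ?thesis using up by simp
qed



lemma final_arith:
  fixes m e i :: nat
  shows "(\<Sum>u=0..i. gauss_binom (2 ^ e) i u * (\<Prod>j<u. ((2::real) ^ m - (2 ^ e) ^ j))
       * (2 ^ m) ^ (i - u) * (2 ^ e) ^ (u * (u + 1) div 2)) =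
    2 ^ (m * i) * (\<Sum>u = 0..i. gauss_binom (2 ^ e) i u * 2 ^ (e * u * (u + 1) div 2)
        * (\<Prod>j = 0..<u. (1 - 2 powr (real (e * j) - real m))))"
  unfolding sum_distrib_left
proof (rule sum.cong[OF refl])
  fix u assume "u \<in> {0..i}"
  then have ui: "u \<le> i" by simp
  have p1: "(\<Prod>j = 0..<u. (1 - 2 powr (real (e * j) - real m))) * (2::real) ^ (m * u)
      = (\<Prod>j<u. ((2::real) ^ m - (2 ^ e) ^ j))"
  proof -
    have "(2::real) ^ (m * u) = (\<Prod>j<u. 2 ^ m)" by (simp add: power_mult)
    then have "(\<Prod>j = 0..<u. (1 - 2 powr (real (e * j) - real m))) * (2::real) ^ (m * u)
        = (\<Prod>j<u. (1 - 2 powr (real (e * j) - real m)) * 2 ^ m)"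
      by (simp add: atLeast0LessThan prod.distrib)
    also have "\<dots> = (\<Prod>j<u. ((2::real) ^ m - (2 ^ e) ^ j))"
    proof (rule prod.cong[OF refl])
      fix j
      have "2 powr (real (e * j) - real m) = (2::real) ^ (e * j) / 2 ^ m"
        by (simp only: powr_diff powr_realpow[of 2 "e * j", symmetric] powr_realpow[of 2 m, symmetric])
      then show "(1 - 2 powr (real (e * j) - real m)) * 2 ^ m = (2::real) ^ m - (2 ^ e) ^ j"
        by (simp add: field_simps power_mult)
    qed
    finally show ?thesis .
  qed
  have p2: "(2::real) ^ (e * u * (u + 1) div 2) = (2 ^ e) ^ (u * (u + 1) div 2)"
  proof -
    obtain t where t: "u * (u + 1) = 2 * t" by (metis dvd_def even_mult_iff even_Suc Suc_eq_plus1)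
    then have "e * u * (u + 1) = 2 * (e * t)" by (metis mult.assoc mult.left_commute)
    then have "e * u * (u + 1) div 2 = e * (u * (u + 1) div 2)" using t by simp
    then show ?thesis by (simp add: power_mult)
  qed
  have p3: "(2::real) ^ (m * i) = (2 ^ m) ^ (i - u) * 2 ^ (m * u)"
    using ui by (simp add: power_mult[symmetric] power_add[symmetric] algebra_simps)
  show "gauss_binom (2 ^ e) i u * (\<Prod>j<u. ((2::real) ^ m - (2 ^ e) ^ j)) * (2 ^ m) ^ (i - u) * (2 ^ e) ^ (u * (u + 1) div 2)
      = 2 ^ (m * i) * (gauss_binom (2 ^ e) i u * 2 ^ (e * u * (u + 1) div 2) * (\<Prod>j = 0..<u. (1 - 2 powr (real (e * j) - real m))))"
    unfolding p2 p3 p1[symmetric] by (simp add: algebra_simps)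
qed



definition il :: "'a list \<Rightarrow> 'a list \<Rightarrow> 'a list" where
  "il x y = concat (map (\<lambda>(u, v). [u, v]) (zip x y))"

lemma il_Cons [simp]: "il (u # x) (v # y) = u # v # il x y" by (simp add: il_def)
lemma il_Nil [simp]: "il [] y = []" by (simp add: il_def)

lemma il_length: "length x = length y \<Longrightarrow> length (il x y) = 2 * length x"
proof (induction x arbitrary: y)
  case Nil then show ?case by simp
next
  case (Cons u x) then show ?case by (cases y) auto
qed

lemma il_nth: "length x = length y \<Longrightarrow> l < length x \<Longrightarrow> il x y ! (2 * l) = x ! l \<and> il x y ! (2 * l + 1) = y ! l"
proof (induction x arbitrary: y l)
  case Nil then show ?case by simp
next
  case (Cons u x)
  then obtain v y' where y: "y = v # y'" by (cases y) auto
  show ?case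
  proof (cases l)
    case 0 then show ?thesis using y by simp
  next
    case (Suc l')
    have "il (u # x) y ! (2 * l) = il x y' ! (2 * l')" using y Suc by simp
    moreover have "il (u # x) y ! (2 * l + 1) = il x y' ! (2 * l' + 1)" using y Suc by simp
    ultimately show ?thesis using Cons.IH[of y' l'] Cons.prems y Suc by simp
  qed
qed

lemma Ea_nth:
  assumes "length x = i" "length y = i"
  shows "Ea m d a x y = (\<Sum>l<i. x ! l * sg m d a (y ! l) + sg m d a (x ! l) * y ! l)"
proof -
  have "Ea m d a x y = (\<Sum>l = 0..<length (zip x y). (\<lambda>(u, v). u * sg m d a v + sg m d a u * v) (zip x y ! l))"
    unfolding Ea_def by (simp add: sum_list_sum_nth)
  also have "\<dots> = (\<Sum>l<i. x ! l * sg m d a (y ! l) + sg m d a (x ! l) * y ! l)"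
    using assms by (simp add: atLeast0LessThan)
  finally show ?thesis .
qed

context FF
begin

lemma Ea_neg: "Ea m d (- b) (x::'a list) y = frob m (- b * int d) (Ea m d b x y)"
proof (induction x arbitrary: y)
  case Nil then show ?case by simp
next
  case (Cons u x)
  show ?case
  proof (cases y)
    case Nil then show ?thesis by simp
  next
    case (Cons v y')
    have inv: "frob m (- (b * int d)) (frob m (b * int d) z) = z" for z :: 'a
      using frob_comp[OF fe mpos] frob_zero_exp[OF mpos] by simp
    show ?thesis using Cons.IH[of y'] Cons
      by (simp add: sg_def frob_add[OF ch] frob_mult inv algebra_simps)
  qed
qed

lemma Ea_cong: "(a * int d) mod int m = (a' * int d) mod int m \<Longrightarrow> Ea m d a x y = Ea m d a' (x::'a list) y"
proof -
  assume h: "(a * int d) mod int m = (a' * int d) mod int m"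
  have "(frob m (a * int d) :: 'a \<Rightarrow> 'a) = frob m (a' * int d)"
    using frob_cong[OF h] by blast
  then show ?thesis unfolding Ea_def sg_def by simp
qed

end

context FFF
begin

lemma goodw_iff:
  assumes mn: "m = 2 * n" and en: "e dvd n" and kn: "k = n div e"
  shows "goodw x y \<longleftrightarrow> (\<forall>j\<in>{0..s}. Ea m d (int k - int j) (x::'a list) y = 0)"
proof
  assume "goodw x y" then show "\<forall>j\<in>{0..s}. Ea m d (int k - int j) x y = 0"
    unfolding goodw_def by auto
next
  assume h: "\<forall>j\<in>{0..s}. Ea m d (int k - int j) x y = 0"
  have kd: "2 * int k * int d = int m * int (d div e)"
  proof -
    have "k * d = n * (d div e)" using kn en edvd(2) by (metis div_mult_swap dvd_div_mult mult.commute)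
    then show ?thesis using mn by (metis (mono_tags, lifting) mult.assoc of_nat_mult of_nat_numeral)
  qed
  show "goodw x y" unfolding goodw_def
  proof (intro allI impI)
    fix a assume a: "int k - int s \<le> a \<and> a \<le> int k + int s"
    show "Ea m d a x y = 0"
    proof (cases "a \<le> int k")
      case True
      define j where "j = nat (int k - a)"
      have "j \<in> {0..s}" "a = int k - int j" using a True by (auto simp: j_def)
      then show ?thesis using h by auto
    next
      case False
      define j where "j = nat (a - int k)"
      have j: "j \<in> {0..s}" "a = int k + int j" using a False by (auto simp: j_def)
      have "(a * int d) mod int m = ((- (int k - int j)) * int d) mod int m"
      proof -
        have "a * int d = (- (int k - int j)) * int d + int m * int (d div e)"
          using j(2) kd by (simp add: algebra_simps)
        then show ?thesis by simp
      qed
      then have "Ea m d a x y = Ea m d (- (int k - int j)) x y" by (rule Ea_cong)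
      also have "\<dots> = frob m (- (int k - int j) * int d) (Ea m d (int k - int j) x y)" by (rule Ea_neg)
      also have "\<dots> = 0" using h j(1) by simp
      finally show ?thesis .
    qed
  qed
qed

lemma V_card:
  assumes mn: "m = 2 * n" and en: "e dvd n" and kn: "k = n div e"
  shows "card (V_set m n d e s i :: 'a list set) = card {(x, y). length x = i \<and> length y = i \<and> goodw x y}"
proof -
  let ?P = "{(x, y). length x = i \<and> length y = i \<and> goodw x (y::'a list)}"
  have cond: "(\<forall>j\<in>{0..s}. (\<Sum>l\<in>{1..i}. il x y ! (2*l - 2) * frob m ((int (n div e) - int j) * int d) (il x y ! (2*l - 1))
           + frob m ((int (n div e) - int j) * int d) (il x y ! (2*l - 2)) * il x y ! (2*l - 1)) = 0)
        \<longleftrightarrow> goodw x y" if l: "length x = i" "length y = i" for x y :: "'a list"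
  proof -
    have "(\<Sum>l\<in>{1..i}. il x y ! (2*l - 2) * frob m ((int (n div e) - int j) * int d) (il x y ! (2*l - 1))
           + frob m ((int (n div e) - int j) * int d) (il x y ! (2*l - 2)) * il x y ! (2*l - 1))
        = Ea m d (int k - int j) x y" for j
    proof -
      have "(\<Sum>l\<in>{1..i}. il x y ! (2*l - 2) * frob m ((int (n div e) - int j) * int d) (il x y ! (2*l - 1))
           + frob m ((int (n div e) - int j) * int d) (il x y ! (2*l - 2)) * il x y ! (2*l - 1))
         = (\<Sum>l<i. il x y ! (2*l) * frob m ((int (n div e) - int j) * int d) (il x y ! (2*l + 1))
           + frob m ((int (n div e) - int j) * int d) (il x y ! (2*l)) * il x y ! (2*l + 1))"
        by (simp add: sum.atLeast1_atMost_eq)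
      also have "\<dots> = (\<Sum>l<i. x ! l * sg m d (int k - int j) (y ! l) + sg m d (int k - int j) (x ! l) * y ! l)"
        by (rule sum.cong[OF refl]) (use il_nth[of x y] l in \<open>simp add: sg_def kn\<close>)
      also have "\<dots> = Ea m d (int k - int j) x y" using Ea_nth[OF l] by simp
      finally show ?thesis .
    qed
    then show ?thesis using goodw_iff[OF mn en kn] by simp
  qed
  have img: "V_set m n d e s i = (\<lambda>(x, y). il x y) ` ?P"
  proof (rule set_eqI, rule iffI)
    fix xs :: "'a list" assume xs: "xs \<in> V_set m n d e s i"
    define x where "x = map (\<lambda>l. xs ! (2 * l)) [0..<i]"
    define y where "y = map (\<lambda>l. xs ! (2 * l + 1)) [0..<i]"
    have lx: "length x = i" "length y = i" by (simp_all add: x_def y_def)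
    have lxs: "length xs = 2 * i" using xs by (simp add: V_set_def)
    have eq: "il x y = xs"
    proof (rule nth_equalityI)
      show "length (il x y) = length xs" using il_length[of x y] lx lxs by simp
      fix p assume "p < length (il x y)"
      then have p: "p < 2 * i" using il_length[of x y] lx by simp
      show "il x y ! p = xs ! p"
      proof (cases "even p")
        case True
        then obtain l where l: "p = 2 * l" by blast
        then have "l < i" using p by simp
        then show ?thesis using il_nth[of x y l] lx l by (simp add: x_def)
      next
        case False
        then obtain l where l: "p = 2 * l + 1" using oddE by blast
        then have "l < i" using p by simp
        then show ?thesis using il_nth[of x y l] lx l by (simp add: y_def)
      qed
    qed
    have "goodw x y" using cond[OF lx] xs eq unfolding V_set_def by simp
    then have "(x, y) \<in> ?P" using lx by simp
    then show "xs \<in> (\<lambda>(x, y). il x y) ` ?P" by (rule image_eqI[rotated]) (simp add: eq)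
  next
    fix xs :: "'a list" assume "xs \<in> (\<lambda>(x, y). il x y) ` ?P"
    then obtain pr where pr: "pr \<in> ?P" "xs = (\<lambda>(x, y). il x y) pr" by (rule imageE)
    obtain x y where "pr = (x, y)" by (cases pr)
    then have h: "length x = i" "length y = i" "goodw x y" "xs = il x y" using pr by simp_all
    then show "xs \<in> V_set m n d e s i"
      using cond[OF h(1,2)] il_length[of x y] unfolding V_set_def by simp
  qed
  have inj: "inj_on (\<lambda>(x, y). il x y) ?P"
  proof (rule inj_onI)
    fix p1 p2 assume p: "p1 \<in> ?P" "p2 \<in> ?P" "(\<lambda>(x, y). il x y) p1 = (\<lambda>(x, y). il x y) p2"
    obtain x y where p1: "p1 = (x, y)" by (cases p1)
    obtain x' y' where p2: "p2 = (x', y')" by (cases p2)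
    have h: "length x = i" "length y = i" "length x' = i" "length y' = i" "il x y = il x' y'"
      using p p1 p2 by simp_all
    have "x = x'"
    proof (rule nth_equalityI)
      show "length x = length x'" using h by simp
      fix l assume "l < length x"
      then show "x ! l = x' ! l" using il_nth[of x y l] il_nth[of x' y' l] h by simp
    qed
    moreover have "y = y'"
    proof (rule nth_equalityI)
      show "length y = length y'" using h by simp
      fix l assume "l < length y"
      then show "y ! l = y' ! l" using il_nth[of x y l] il_nth[of x' y' l] h by simp
    qed
    ultimately show "p1 = p2" using p1 p2 by simp
  qed
  show ?thesis unfolding img using inj by (rule card_image)
qed

end


theorem theorem6p4:
  fixes m n d e s i :: nat
    and V :: "'a::{field,finite} list set"
  defines "V \<equiv> V_set m n d e s i"
  assumes "card (UNIV :: 'a set) = 2 ^ m"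
    and "m > 0" "n > 0" "d > 0" "e > 0"
    and "m = 2 * n" "e = gcd n d" "e = gcd m d"
    and "1 \<le> i" "i \<le> s"
  shows "real (card V) =
    2 ^ (m * i) * (\<Sum>u = 0..i. gauss_binom (2 ^ e) i u * 2 ^ (e * u * (u + 1) div 2)
        * (\<Prod>j = 0..<u. (1 - 2 powr (real (e * j) - real m))))"
proof -
  note cardU = assms(2)
  have ch: "(1::'a) + 1 = 0" by (rule char2[OF cardU assms(3)])
  have fe: "\<And>z::'a. z ^ (2 ^ m) = z" by (rule fermat[OF cardU])
  have g: "gcd m d = e" using assms(9) by simp
  interpret FFF "Kf e :: 'a set" m d e s "n div e"
    by unfold_locales (use ch fe assms(3) g in auto)
  have en: "e dvd n" using assms(8) by simp
  have edm: "e dvd m" using assms(9) by simp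
  have cK: "card (Kf e :: 'a set) = 2 ^ e" by (rule card_Kf[OF ch fe cardU assms(6) edm assms(3)])
  have "(2::nat) ^ 1 \<le> 2 ^ e" by (rule power_increasing) (use assms(6) in auto)
  then have q1: "card (Kf e :: 'a set) > 1" using cK by simp
  have "real (card V) = real (card {(x, y). length x = i \<and> length y = i \<and> goodw x y})"
    unfolding V_def using V_card[OF assms(7) en refl] by simp
  also have "\<dots> = (\<Sum>u=0..i. gauss_binom (real (card (Kf e :: 'a set))) i u
       * (\<Prod>j<u. (real (card (UNIV :: 'a set)) - real (card (Kf e :: 'a set)) ^ j))
       * real (card (UNIV :: 'a set)) ^ (i - u) * real (card (Kf e :: 'a set)) ^ (u * (u + 1) div 2))"
    by (rule pairs_count[OF assms(11) q1])
  also have "\<dots> = (\<Sum>u=0..i. gauss_binom (2 ^ e) i u * (\<Prod>j<u. ((2::real) ^ m - (2 ^ e) ^ j))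
       * (2 ^ m) ^ (i - u) * (2 ^ e) ^ (u * (u + 1) div 2))"
    using cK cardU by simp
  also have "\<dots> = 2 ^ (m * i) * (\<Sum>u = 0..i. gauss_binom (2 ^ e) i u * 2 ^ (e * u * (u + 1) div 2)
        * (\<Prod>j = 0..<u. (1 - 2 powr (real (e * j) - real m))))"
    by (rule final_arith)
  finally show ?thesis .
qed


end
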